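(* Let $(\mathcal{M},\tau)$ be a II$_1$ factor, let $\{\alpha_k\}_{k\in\mathbb{N}}$ be a summable sequence of positive reals, and let $(\{E^k_\lambda\}_{\lambda\in I_k})_{k\in\mathbb{N}}$ be an $\{\alpha_k\}$-compatible sequence of brsr's in $\mathcal{M}$. Then there exists a brsr $\{E_\lambda\}_{\lambda\in I}$ in $\mathcal{M}$ which strongly refines $\{E^k_\lambda\}$ for every $k\in\mathbb{N}$. Moreover, if $\mathcal{A}\subseteq\mathcal{M}$ is a masa and $E^k_\lambda\in\mathcal{A}$ for all $k$ and $\lambda$, then $\{E_\lambda\}$ can be chosen with all $E_\lambda\in\mathcal{A}$.
   Context: $\tau$ is the faithful normal tracial state of $\mathcal{M}$; $\mathcal{P}(\mathcal{M})$ denotes the projections of $\mathcal{M}$ with the strong operator topology. For $I=[\alpha,\beta]$ and $p\in\mathcal{P}(\mathcal{M})$, a brsr (bounded right spectral resolution) of $p$ is a decreasing, SOT right-continuous map $E:I\to\mathcal{P}(\mathcal{M})$, $\lambda\mapsto E_\lambda$, with $E_\beta=0$, $E_\alpha=p$. For brsr's $\{E_\lambda\}_{\lambda\in[\alpha,\beta]}$ and $\{E'_\lambda\}_{\lambda\in[\alpha',\beta']}$, $(\{E'_\lambda\},f)$ is a strong refinement of $\{E_\lambda\}$ if $f:[\alpha,\beta]\to[\alpha',\beta']$ is increasing (non-decreasing), right-continuous, $f(\beta)=\beta'$, $E_\lambda=E'_{f(\lambda)}$ for all $\lambda$, $f(\lambda)\ge\lambda$ for all $\lambda$, and $f(\lambda)-f(\mu)\ge\lambda-\mu$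 for all $\lambda>\mu$; we then say $\{E'_\lambda\}$ strongly refines $\{E_\lambda\}$. A sequence $(\{E^k_\lambda\}_{\lambda\in I_k})_{k\in\mathbb{N}}$ of brsr's is $\{\alpha_k\}$-compatible if: (1) there are $\alpha,\beta\ge0$ with $I_k=[\alpha,\beta+\sum_{i=1}^k\alpha_i]$ for every $k$; (2) for every $k$ there is $f_k:I_k\to I_{k+1}$ such that $(\{E^{k+1}_\lambda\},f_k)$ is a strong refinement of $\{E^k_\lambda\}$; (3) $f_k(\lambda)-\lambda\le\alpha_k$ for all $\lambda\in I_k$ and all $k$. *)

theory Defs
  imports "HOL-Analysis.Analysis"
begin

class complex_vector = real_vector +
  fixes scaleC :: "complex \<Rightarrow> 'a \<Rightarrow> 'a"
  assumes scaleC_add_right: "scaleC a (x + y) = scaleC a x + scaleC a y"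
    and scaleC_add_left: "scaleC (a + b) x = scaleC a x + scaleC b x"
    and scaleC_scaleC: "scaleC a (scaleC b x) = scaleC (a * b) x"
    and scaleC_one: "scaleC 1 x = x"
    and scaleR_scaleC: "scaleR r x = scaleC (complex_of_real r) x"

class complex_inner = complex_vector + real_normed_vector +
  fixes cinner :: "'a \<Rightarrow> 'a \<Rightarrow> complex"
  assumes cinner_add_left: "cinner (x + y) z = cinner x z + cinner y z"
    and cinner_scaleC_left: "cinner (scaleC a x) y = cnj a * cinner x y"
    and cinner_commute: "cinner x y = cnj (cinner y x)"
    and cinner_self_nonneg: "Im (cinner x x) = 0 \<and> Re (cinner x x) \<ge> 0"
    and cinner_self_eq_zero: "cinner x x = 0 \<longleftrightarrow> x = 0"
    and norm_eq_sqrt_cinner: "norm x = sqrt (Re (cinner x x))"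

class chilbert_space = complex_inner + complete_space

definition clinear_op :: "('h::complex_vector \<Rightarrow> 'h) \<Rightarrow> bool" where
  "clinear_op T \<longleftrightarrow> (\<forall>x y. T (x + y) = T x + T y) \<and> (\<forall>c x. T (scaleC c x) = scaleC c (T x))"

definition bounded_op :: "('h::complex_inner \<Rightarrow> 'h) \<Rightarrow> bool" where
  "bounded_op T \<longleftrightarrow> clinear_op T \<and> (\<exists>K. \<forall>x. norm (T x) \<le> K * norm x)"

definition adj :: "('h::complex_inner \<Rightarrow> 'h) \<Rightarrow> ('h \<Rightarrow> 'h)" where
  "adj T = (SOME S. \<forall>x y. cinner (T x) y = cinner x (S y))"

definition op_add :: "('h::complex_vector \<Rightarrow> 'h) \<Rightarrow> ('h \<Rightarrow> 'h) \<Rightarrow> ('h \<Rightarrow> 'h)" where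
  "op_add A B = (\<lambda>x. A x + B x)"

definition op_scale :: "complex \<Rightarrow> ('h::complex_vector \<Rightarrow> 'h) \<Rightarrow> ('h \<Rightarrow> 'h)" where
  "op_scale c A = (\<lambda>x. scaleC c (A x))"

definition commutant :: "('h::complex_inner \<Rightarrow> 'h) set \<Rightarrow> ('h \<Rightarrow> 'h) set" where
  "commutant S = {T. bounded_op T \<and> (\<forall>A\<in>S. T \<circ> A = A \<circ> T)}"

definition star_subalgebra :: "('h::complex_inner \<Rightarrow> 'h) set \<Rightarrow> bool" where
  "star_subalgebra A \<longleftrightarrow> (\<forall>T\<in>A. bounded_op T) \<and>
     (\<forall>S\<in>A. \<forall>T\<in>A. op_add S T \<in> A \<and> S \<circ> T \<in> A) \<and>
     (\<forall>c. \<forall>T\<in>A. op_scale c T \<in> A) \<and> (\<forall>T\<in>A. adj T \<in> A)"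

definition von_neumann_algebra :: "('h::chilbert_space \<Rightarrow> 'h) set \<Rightarrow> bool" where
  "von_neumann_algebra M \<longleftrightarrow> star_subalgebra M \<and> id \<in> M \<and> commutant (commutant M) = M"

definition factor :: "('h::chilbert_space \<Rightarrow> 'h) set \<Rightarrow> bool" where
  "factor M \<longleftrightarrow> von_neumann_algebra M \<and> M \<inter> commutant M = range (\<lambda>c. op_scale c id)"

definition c_independent :: "('h::complex_vector \<Rightarrow> 'h) set \<Rightarrow> bool" where
  "c_independent F \<longleftrightarrow> (\<forall>G c. finite G \<and> G \<subseteq> F \<and> (\<lambda>x. \<Sum>g\<in>G. scaleC (c g) (g x)) = (\<lambda>x. 0)
      \<longrightarrow> (\<forall>g\<in>G. c g = 0))"

definition infinite_dimensional :: "('h::complex_vector \<Rightarrow> 'h) set \<Rightarrow> bool" where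
  "infinite_dimensional M \<longleftrightarrow> (\<exists>F\<subseteq>M. infinite F \<and> c_independent F)"

definition positive_op :: "('h::complex_inner \<Rightarrow> 'h) \<Rightarrow> bool" where
  "positive_op A \<longleftrightarrow> bounded_op A \<and> (\<forall>x. Im (cinner x (A x)) = 0 \<and> Re (cinner x (A x)) \<ge> 0)"

definition op_le :: "('h::complex_inner \<Rightarrow> 'h) \<Rightarrow> ('h \<Rightarrow> 'h) \<Rightarrow> bool" where
  "op_le A B \<longleftrightarrow> positive_op (\<lambda>x. B x - A x)"

definition is_projection :: "('h::complex_inner \<Rightarrow> 'h) \<Rightarrow> bool" where
  "is_projection p \<longleftrightarrow> bounded_op p \<and> p \<circ> p = p \<and> adj p = p"

definition projections :: "('h::complex_inner \<Rightarrow> 'h) set \<Rightarrow> ('h \<Rightarrow> 'h) set" where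
  "projections M = {p\<in>M. is_projection p}"

definition normal_functional :: "('h::chilbert_space \<Rightarrow> 'h) set \<Rightarrow> (('h \<Rightarrow> 'h) \<Rightarrow> complex) \<Rightarrow> bool" where
  "normal_functional M \<tau> \<longleftrightarrow>
    (\<forall>S A. S \<subseteq> M \<and> S \<noteq> {} \<and> (\<forall>B\<in>S. positive_op B)
       \<and> (\<forall>B\<in>S. \<forall>C\<in>S. \<exists>D\<in>S. op_le B D \<and> op_le C D)
       \<and> (\<exists>K. \<forall>B\<in>S. op_le B (op_scale (complex_of_real K) id))
       \<and> (\<forall>B\<in>S. op_le B A)
       \<and> (\<forall>C. bounded_op C \<and> adj C = C \<and> (\<forall>B\<in>S. op_le B C) \<longrightarrow> op_le A C)
     \<longrightarrow> Re (\<tau> A) = (SUP B\<in>S. Re (\<tau> B)))"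

definition faithful_normal_tracial_state ::
    "('h::chilbert_space \<Rightarrow> 'h) set \<Rightarrow> (('h \<Rightarrow> 'h) \<Rightarrow> complex) \<Rightarrow> bool" where
  "faithful_normal_tracial_state M \<tau> \<longleftrightarrow>
     (\<forall>A\<in>M. \<forall>B\<in>M. \<tau> (op_add A B) = \<tau> A + \<tau> B \<and> \<tau> (A \<circ> B) = \<tau> (B \<circ> A)) \<and>
     (\<forall>c. \<forall>A\<in>M. \<tau> (op_scale c A) = c * \<tau> A) \<and>
     (\<forall>A\<in>M. positive_op A \<longrightarrow> Im (\<tau> A) = 0 \<and> Re (\<tau> A) \<ge> 0) \<and>
     \<tau> id = 1 \<and>
     (\<forall>A\<in>M. positive_op A \<and> \<tau> A = 0 \<longrightarrow> A = (\<lambda>x. 0)) \<and>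
     normal_functional M \<tau>"

definition II1_factor :: "('h::chilbert_space \<Rightarrow> 'h) set \<Rightarrow> (('h \<Rightarrow> 'h) \<Rightarrow> complex) \<Rightarrow> bool" where
  "II1_factor M \<tau> \<longleftrightarrow> factor M \<and> infinite_dimensional M \<and> faithful_normal_tracial_state M \<tau>"

definition abelian_star_subalgebra_of :: "('h::chilbert_space \<Rightarrow> 'h) set \<Rightarrow> ('h \<Rightarrow> 'h) set \<Rightarrow> bool" where
  "abelian_star_subalgebra_of M A \<longleftrightarrow> A \<subseteq> M \<and> star_subalgebra A \<and> (\<forall>S\<in>A. \<forall>T\<in>A. S \<circ> T = T \<circ> S)"

definition masa :: "('h::chilbert_space \<Rightarrow> 'h) set \<Rightarrow> ('h \<Rightarrow> 'h) set \<Rightarrow> bool" where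
  "masa M A \<longleftrightarrow> abelian_star_subalgebra_of M A \<and>
     (\<forall>B. abelian_star_subalgebra_of M B \<and> A \<subseteq> B \<longrightarrow> B = A)"

definition brsr :: "('h::chilbert_space \<Rightarrow> 'h) set \<Rightarrow> real \<Rightarrow> real \<Rightarrow> ('h \<Rightarrow> 'h) \<Rightarrow> (real \<Rightarrow> 'h \<Rightarrow> 'h) \<Rightarrow> bool" where
  "brsr M a b p E \<longleftrightarrow> a \<le> b \<and> p \<in> projections M \<and>
     (\<forall>l\<in>{a..b}. E l \<in> projections M) \<and>
     (\<forall>l\<in>{a..b}. \<forall>m\<in>{a..b}. l \<le> m \<longrightarrow> op_le (E m) (E l)) \<and>
     (\<forall>l\<in>{a..b}. \<forall>x. ((\<lambda>m. E m x) \<longlongrightarrow> E l x) (at l within {l..b})) \<and>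
     E b = (\<lambda>x. 0) \<and> E a = p"

definition strong_refinement :: "real \<Rightarrow> real \<Rightarrow> (real \<Rightarrow> 'h \<Rightarrow> 'h) \<Rightarrow> (real \<Rightarrow> real)
     \<Rightarrow> real \<Rightarrow> real \<Rightarrow> (real \<Rightarrow> 'h \<Rightarrow> 'h) \<Rightarrow> bool" where
  "strong_refinement a' b' E' f a b E \<longleftrightarrow>
     (\<forall>l\<in>{a..b}. f l \<in> {a'..b'}) \<and> mono_on {a..b} f \<and>
     (\<forall>l\<in>{a..b}. (f \<longlongrightarrow> f l) (at l within {l..b})) \<and>
     f b = b' \<and>
     (\<forall>l\<in>{a..b}. E l = E' (f l) \<and> f l \<ge> l) \<and>
     (\<forall>l\<in>{a..b}. \<forall>m\<in>{a..b}. l > m \<longrightarrow> f l - f m \<ge> l - m)"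

definition strongly_refines :: "real \<Rightarrow> real \<Rightarrow> (real \<Rightarrow> 'h \<Rightarrow> 'h)
     \<Rightarrow> real \<Rightarrow> real \<Rightarrow> (real \<Rightarrow> 'h \<Rightarrow> 'h) \<Rightarrow> bool" where
  "strongly_refines a' b' E' a b E \<longleftrightarrow> (\<exists>f. strong_refinement a' b' E' f a b E)"

text \<open>Right endpoint of I_k = [a, b + sum_{i=1}^k alpha_i].\<close>
definition Iend :: "(nat \<Rightarrow> real) \<Rightarrow> real \<Rightarrow> nat \<Rightarrow> real" where
  "Iend al b k = b + (\<Sum>i=1..k. al i)"

text \<open>Sequence (E^k)_{k>=1} of brsr's is {alpha_k}-compatible, with I_k = [a, Iend al b k].\<close>
definition compatible :: "('h::chilbert_space \<Rightarrow> 'h) set \<Rightarrow> (nat \<Rightarrow> real) \<Rightarrow> real \<Rightarrow> real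
     \<Rightarrow> (nat \<Rightarrow> real \<Rightarrow> 'h \<Rightarrow> 'h) \<Rightarrow> bool" where
  "compatible M al a b EE \<longleftrightarrow> a \<ge> 0 \<and> b \<ge> 0 \<and>
     (\<forall>k\<ge>1. (\<exists>p. brsr M a (Iend al b k) p (EE k)) \<and>
        (\<exists>f. strong_refinement a (Iend al b (k+1)) (EE (k+1)) f a (Iend al b k) (EE k) \<and>
             (\<forall>l\<in>{a..Iend al b k}. f l - l \<le> al k)))"

end

theory Submission
  imports Defs
begin
lemma mult_cnj_self: "z * cnj z = (complex_of_real (cmod z))^2"
  by (metis complex_norm_square of_real_power)

lemma cnj_mult_self: "cnj z * z = (complex_of_real (cmod z))^2"
  by (metis complex_norm_square of_real_power mult.commute)

lemma scaleC_zero_left [simp]: "scaleC 0 (x::'a::complex_vector) = 0"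
  using scaleR_scaleC[of 0 x] by simp

lemma scaleC_zero_right [simp]: "scaleC a (0::'a::complex_vector) = 0"
proof -
  have "scaleC a (0::'a) = scaleC a 0 + scaleC a 0" using scaleC_add_right[of a 0 0] by simp
  thus ?thesis by simp
qed

lemma scaleC_minus_left: "scaleC (- c) (x::'a::complex_vector) = - scaleC c x"
proof -
  have "scaleC (- c) x + scaleC c x = 0" using scaleC_add_left[of "-c" c x] by simp
  thus ?thesis by (simp add: eq_neg_iff_add_eq_0)
qed

lemma scaleC_minus_right: "scaleC c (- x::'a::complex_vector) = - scaleC c x"
proof -
  have "scaleC c (- x) + scaleC c x = 0" using scaleC_add_right[of c "-x" x] by simp
  thus ?thesis by (simp add: eq_neg_iff_add_eq_0)
qed

lemma scaleC_diff_right: "scaleC c (x - y::'a::complex_vector) = scaleC c x - scaleC c y"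
  using scaleC_add_right[of c x "-y"] by (simp add: scaleC_minus_right)

lemma scaleC_diff_left: "scaleC (c - d) (x::'a::complex_vector) = scaleC c x - scaleC d x"
  using scaleC_add_left[of c "-d" x] by (simp add: scaleC_minus_left)

lemma scaleC_one' [simp]: "scaleC 1 (x::'a::complex_vector) = x" by (rule scaleC_one)

lemma cinner_add_right: "cinner x (y + z) = cinner x y + cinner (x::'a::complex_inner) z"
  by (metis cinner_commute cinner_add_left complex_cnj_add)

lemma cinner_scaleC_right: "cinner x (scaleC c y) = c * cinner (x::'a::complex_inner) y"
  by (metis cinner_commute cinner_scaleC_left complex_cnj_cnj complex_cnj_mult)

lemma cinner_zero_left [simp]: "cinner 0 (x::'a::complex_inner) = 0"
  using cinner_add_left[of 0 0 x] by simp

lemma cinner_zero_right [simp]: "cinner x (0::'a::complex_inner) = 0"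
  using cinner_add_right[of x 0 0] by simp

lemma cinner_minus_left: "cinner (- x) (y::'a::complex_inner) = - cinner x y"
  using cinner_add_left[of x "-x" y] by (simp add: eq_neg_iff_add_eq_0 add.commute)

lemma cinner_minus_right: "cinner x (- y::'a::complex_inner) = - cinner x y"
  using cinner_add_right[of x y "-y"] by (simp add: eq_neg_iff_add_eq_0 add.commute)

lemma cinner_diff_left: "cinner (x - y) (z::'a::complex_inner) = cinner x z - cinner y z"
  using cinner_add_left[of x "-y" z] by (simp add: cinner_minus_left)

lemma cinner_diff_right: "cinner x (y - z::'a::complex_inner) = cinner x y - cinner x z"
  using cinner_add_right[of x y "-z"] by (simp add: cinner_minus_right)

lemma cinner_self: "cinner x x = complex_of_real ((norm (x::'a::complex_inner))^2)"
proof -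
  have "Im (cinner x x) = 0" "Re (cinner x x) \<ge> 0" using cinner_self_nonneg[of x] by auto
  moreover have "(norm x)^2 = Re (cinner x x)"
    using norm_eq_sqrt_cinner[of x] calculation by simp
  ultimately show ?thesis by (simp add: complex_eq_iff)
qed

lemma cinner_self_Re: "Re (cinner x x) = (norm (x::'a::complex_inner))^2"
  by (simp add: cinner_self)

lemma norm_scaleC: "norm (scaleC c (x::'a::complex_inner)) = cmod c * norm x"
proof -
  have "complex_of_real ((norm (scaleC c x))^2) = cinner (scaleC c x) (scaleC c x)"
    by (simp add: cinner_self)
  also have "\<dots> = cnj c * c * cinner x x" by (simp add: cinner_scaleC_left cinner_scaleC_right)
  also have "\<dots> = complex_of_real ((cmod c)^2) * complex_of_real ((norm x)^2)"
    by (simp add: cinner_self mult_cnj_self cnj_mult_self mult.commute)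
  also have "\<dots> = complex_of_real ((cmod c * norm x)^2)"
    by (simp add: power_mult_distrib)
  finally have "(norm (scaleC c x))^2 = (cmod c * norm x)^2" using of_real_eq_iff by blast
  thus ?thesis by (simp add: power2_eq_iff_nonneg)
qed

lemma norm_add_sq: "(norm (x + y::'a::complex_inner))^2 = (norm x)^2 + (norm y)^2 + 2 * Re (cinner x y)"
proof -
  have "(norm (x+y))^2 = Re (cinner (x+y) (x+y))" by (simp add: cinner_self_Re)
  also have "\<dots> = Re (cinner x x) + Re (cinner y y) + Re (cinner x y) + Re (cinner y x)"
    by (simp add: cinner_add_left cinner_add_right)
  also have "Re (cinner y x) = Re (cinner x y)" by (subst cinner_commute) simp
  finally show ?thesis by (simp add: cinner_self_Re)
qed

lemma norm_diff_sq: "(norm (x - y::'a::complex_inner))^2 = (norm x)^2 + (norm y)^2 - 2 * Re (cinner x y)"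
  using norm_add_sq[of x "-y"] by (simp add: cinner_minus_right)

lemma cauchy_schwarz: "cmod (cinner x y) \<le> norm x * norm (y::'a::complex_inner)"
proof (cases "y = 0")
  case True thus ?thesis by simp
next
  case False
  define c where "c = cinner y x / complex_of_real ((norm y)^2)"
  have ny: "norm y > 0" using False by simp
  have "0 \<le> (norm (x - scaleC c y))^2" by simp
  also have "\<dots> = (norm x)^2 + (cmod c * norm y)^2 - 2 * Re (cinner x (scaleC c y))"
    by (simp add: norm_diff_sq norm_scaleC)
  also have "cinner x (scaleC c y) = c * cinner x y" by (simp add: cinner_scaleC_right)
  also have "c * cinner x y = complex_of_real ((cmod (cinner x y))^2 / (norm y)^2)"
  proof -
    have "cinner y x = cnj (cinner x y)" by (rule cinner_commute)
    hence "c * cinner x y = cnj (cinner x y) * cinner x y / complex_of_real ((norm y)^2)"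
      by (simp add: c_def)
    thus ?thesis by (simp add: mult.commute mult_cnj_self cnj_mult_self)
  qed
  also have "cmod c = cmod (cinner x y) / (norm y)^2"
    by (simp add: c_def norm_divide cinner_commute[of y x] norm_power)
  finally have "0 \<le> (norm x)^2 + (cmod (cinner x y))^2 / (norm y)^2 - 2 * ((cmod (cinner x y))^2 / (norm y)^2)"
    using ny by (simp add: power_divide power2_eq_square)
  hence "(cmod (cinner x y))^2 / (norm y)^2 \<le> (norm x)^2" by simp
  hence "(cmod (cinner x y))^2 \<le> (norm x)^2 * (norm y)^2" using ny by (simp add: divide_le_eq)
  hence "(cmod (cinner x y))^2 \<le> (norm x * norm y)^2" by (simp add: power_mult_distrib)
  thus ?thesis by (simp add: power2_le_iff_abs_le)
qed

lemma cinner_eq_zero_right: "(\<And>x. cinner x y = 0) \<Longrightarrow> (y::'a::complex_inner) = 0"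
  using cinner_self_eq_zero by blast

lemma cinner_ext_right: "(\<And>x. cinner x y = cinner x z) \<Longrightarrow> (y::'a::complex_inner) = z"
proof -
  assume "\<And>x. cinner x y = cinner x z"
  hence "\<And>x. cinner x (y - z) = 0" by (simp add: cinner_diff_right)
  thus ?thesis using cinner_eq_zero_right by (metis eq_iff_diff_eq_0)
qed

lemma cinner_ext_left: "(\<And>x. cinner y x = cinner z x) \<Longrightarrow> (y::'a::complex_inner) = z"
  by (metis cinner_ext_right cinner_commute)

lemma tendsto_cinner [tendsto_intros]:
  fixes f g :: "'b \<Rightarrow> 'a::complex_inner"
  assumes "(f \<longlongrightarrow> a) F" "(g \<longlongrightarrow> b) F"
  shows "((\<lambda>t. cinner (f t) (g t)) \<longlongrightarrow> cinner a b) F"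
proof -
  have bl: "bounded_bilinear (\<lambda>x y. cinner (x::'a) y)"
  proof
    fix a a' b b' :: 'a and r :: real
    show "cinner (a + a') b = cinner a b + cinner a' b" by (rule cinner_add_left)
    show "cinner a (b + b') = cinner a b + cinner a b'" by (rule cinner_add_right)
    show "cinner (scaleR r a) b = scaleR r (cinner a b)"
      by (simp add: scaleR_scaleC cinner_scaleC_left scaleR_conv_of_real)
    show "cinner a (scaleR r b) = scaleR r (cinner a b)"
      by (simp add: scaleR_scaleC cinner_scaleC_right scaleR_conv_of_real)
    show "\<exists>K. \<forall>a b. norm (cinner (a::'a) b) \<le> norm a * norm b * K"
      by (rule exI[of _ 1]) (simp add: cauchy_schwarz)
  qed
  show ?thesis by (rule bounded_bilinear.tendsto[OF bl assms])
qed

lemma bounded_opD: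
  assumes "bounded_op T"
  shows "T (x + y) = T x + T y" "T (scaleC c x) = scaleC c (T x)"
  using assms unfolding bounded_op_def clinear_op_def by auto

lemma bounded_op_zero: "bounded_op T \<Longrightarrow> T 0 = 0"
  using bounded_opD(2)[of T 0 0] by simp

lemma bounded_op_minus: "bounded_op T \<Longrightarrow> T (- x) = - T x"
  using bounded_opD(2)[of T "-1" x] by (simp add: scaleC_minus_left)

lemma bounded_op_diff: "bounded_op T \<Longrightarrow> T (x - y) = T x - T y"
  using bounded_opD(1)[of T x "-y"] bounded_op_minus[of T y] by simp

lemma bounded_op_bound:
  assumes "bounded_op (T::'a::complex_inner \<Rightarrow> 'a)"
  obtains K where "K > 0" "\<And>x. norm (T x) \<le> K * norm x"
proof -
  obtain K where K: "\<And>x. norm (T x) \<le> K * norm x" using assms unfolding bounded_op_def by auto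
  have "norm (T x) \<le> max K 1 * norm x" for x
    using K[of x] by (smt (verit) mult_right_mono norm_ge_zero)
  thus ?thesis using that[of "max K 1"] by simp
qed

lemma bounded_op_bounded_linear:
  assumes "bounded_op (T::'a::complex_inner \<Rightarrow> 'a)"
  shows "bounded_linear T"
proof
  fix x y :: 'a and r :: real
  show "T (x + y) = T x + T y" using bounded_opD[OF assms] by simp
  show "T (scaleR r x) = scaleR r (T x)" using bounded_opD[OF assms] by (simp add: scaleR_scaleC)
  obtain K where "K > 0" "\<And>x. norm (T x) \<le> K * norm x" using bounded_op_bound[OF assms] by blast
  thus "\<exists>K. \<forall>x. norm (T x) \<le> norm x * K" by (metis mult.commute)
qed

lemma bounded_op_tendsto:
  assumes "bounded_op T" "(f \<longlongrightarrow> l) F"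
  shows "((\<lambda>t. T (f t)) \<longlongrightarrow> T l) F"
  using bounded_linear.tendsto[OF bounded_op_bounded_linear[OF assms(1)] assms(2)] .

lemma bounded_op_add: "bounded_op S \<Longrightarrow> bounded_op T \<Longrightarrow> bounded_op (\<lambda>x. S x + (T::'a::complex_inner \<Rightarrow> 'a) x)"
proof -
  assume S: "bounded_op S" and T: "bounded_op T"
  obtain K1 where K1: "\<And>x. norm (S x) \<le> K1 * norm x" using bounded_op_bound[OF S] by blast
  obtain K2 where K2: "\<And>x. norm (T x) \<le> K2 * norm x" using bounded_op_bound[OF T] by blast
  have "norm (S x + T x) \<le> (K1 + K2) * norm x" for x
    using norm_triangle_ineq[of "S x" "T x"] K1[of x] K2[of x] by (simp add: distrib_right)
  thus ?thesis using S T unfolding bounded_op_def clinear_op_def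
    by (auto simp: scaleC_add_right)
qed

lemma bounded_op_diff_op: "bounded_op S \<Longrightarrow> bounded_op T \<Longrightarrow> bounded_op (\<lambda>x. S x - (T::'a::complex_inner \<Rightarrow> 'a) x)"
proof -
  assume S: "bounded_op S" and T: "bounded_op T"
  have "bounded_op (\<lambda>x. - T x)"
    using T unfolding bounded_op_def clinear_op_def by (auto simp: scaleC_minus_right)
  from bounded_op_add[OF S this] show ?thesis by simp
qed

lemma bounded_op_comp: "bounded_op S \<Longrightarrow> bounded_op T \<Longrightarrow> bounded_op (S \<circ> (T::'a::complex_inner \<Rightarrow> 'a))"
proof -
  assume S: "bounded_op S" and T: "bounded_op T"
  obtain K1 where K1: "K1 > 0" "\<And>x. norm (S x) \<le> K1 * norm x" using bounded_op_bound[OF S] by blast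
  obtain K2 where K2: "\<And>x. norm (T x) \<le> K2 * norm x" using bounded_op_bound[OF T] by blast
  have "norm (S (T x)) \<le> (K1 * K2) * norm x" for x
    using K1(2)[of "T x"] K2[of x] K1(1) by (smt (verit) mult.assoc mult_left_mono)
  thus ?thesis using S T unfolding bounded_op_def clinear_op_def by auto
qed

lemma bounded_op_scale: "bounded_op T \<Longrightarrow> bounded_op (op_scale c (T::'a::complex_inner \<Rightarrow> 'a))"
proof -
  assume T: "bounded_op T"
  obtain K where K: "\<And>x. norm (T x) \<le> K * norm x" using bounded_op_bound[OF T] by blast
  have "norm (scaleC c (T x)) \<le> (cmod c * K) * norm x" for x
    using K[of x] by (simp add: norm_scaleC mult.assoc mult_left_mono)
  moreover have "scaleC c (scaleC d x) = scaleC d (scaleC c (x::'a))" for d x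
    by (simp add: scaleC_scaleC mult.commute)
  ultimately show ?thesis using T unfolding bounded_op_def clinear_op_def op_scale_def
    by (auto simp: scaleC_add_right)
qed

lemma bounded_op_id: "bounded_op (id::'a::complex_inner \<Rightarrow> 'a)"
  unfolding bounded_op_def clinear_op_def by (auto intro: exI[of _ 1])

section \<open>Riesz representation\<close>

lemma riesz:
  fixes \<phi> :: "'a::chilbert_space \<Rightarrow> complex"
  assumes add: "\<And>x y. \<phi> (x + y) = \<phi> x + \<phi> y"
    and sc: "\<And>c x. \<phi> (scaleC c x) = c * \<phi> x"
    and bd: "\<And>x. cmod (\<phi> x) \<le> K * norm x"
  shows "\<exists>z. \<forall>x. \<phi> x = cinner z x"
proof (cases "\<forall>x. \<phi> x = 0")
  case True thus ?thesis by (intro exI[of _ 0]) simp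
next
  case False
  then obtain x0 where x0: "\<phi> x0 \<noteq> 0" by blast
  have phi0: "\<phi> 0 = 0" using sc[of 0 0] by simp
  have phiminus: "\<phi> (x - y) = \<phi> x - \<phi> y" for x y
    using add[of "x - y" y] by simp
  have x0n: "x0 \<noteq> 0" using x0 phi0 by auto
  define U where "U = {cmod (\<phi> x) |x. norm x \<le> 1}"
  define N where "N = Sup U"
  have Une: "U \<noteq> {}" unfolding U_def by (auto intro!: exI[of _ 0])
  have Kpos: "K \<ge> 0" using bd[of x0] x0 x0n
    by (smt (verit, ccfv_SIG) mult_nonpos_nonneg norm_ge_zero zero_less_norm_iff)
  have Ubd: "bdd_above U" unfolding U_def bdd_above_def
    using bd Kpos by (auto intro!: exI[of _ K]) (smt (verit) mult_left_le)
  have leN: "cmod (\<phi> x) \<le> N * norm x" for x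
  proof (cases "x = 0")
    case True thus ?thesis using phi0 by simp
  next
    case False
    define x' where "x' = scaleC (complex_of_real (1 / norm x)) x"
    have "norm x' = 1" using False by (simp add: x'_def norm_scaleC norm_divide)
    hence "cmod (\<phi> x') \<in> U" unfolding U_def by auto
    hence "cmod (\<phi> x') \<le> N" unfolding N_def using Ubd by (simp add: cSup_upper)
    moreover have "cmod (\<phi> x') = cmod (\<phi> x) / norm x" using False
      by (simp add: x'_def sc norm_mult norm_divide)
    ultimately show ?thesis using False by (simp add: divide_le_eq mult.commute)
  qed
  have Npos: "N > 0"
  proof -
    have "0 < cmod (\<phi> x0)" using x0 by simp
    also have "\<dots> \<le> N * norm x0" by (rule leN)
    finally show ?thesis using x0n by (simp add: zero_less_mult_iff)
  qed
  have "\<exists>y. norm y \<le> 1 \<and> \<phi> y = complex_of_real (cmod (\<phi> y)) \<and> N - 1 / real (Suc n) < cmod (\<phi> y)" for n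
  proof -
    have "N - 1 / real (Suc n) < N" by simp
    then obtain r where "r \<in> U" "N - 1 / real (Suc n) < r" unfolding N_def using less_cSupE[OF _ Une] by blast
    then obtain x where x: "norm x \<le> 1" "N - 1 / real (Suc n) < cmod (\<phi> x)" unfolding U_def by auto
    define y where "y = scaleC (cnj (\<phi> x) / complex_of_real (cmod (\<phi> x))) x"
    show ?thesis
    proof (cases "\<phi> x = 0")
      case True thus ?thesis using x by (intro exI[of _ x]) auto
    next
      case False
      have ny: "norm y = norm x" using False by (simp add: y_def norm_scaleC norm_divide)
      have py: "\<phi> y = complex_of_real (cmod (\<phi> x))" using False
        by (simp add: y_def sc field_simps) (metis mult_cnj_self power2_eq_square)
      show ?thesis using x ny py by (intro exI[of _ y]) auto
    qed
  qed
  then obtain y where y: "\<And>n. norm (y n) \<le> 1" "\<And>n. \<phi> (y n) = complex_of_real (cmod (\<phi> (y n)))"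
    "\<And>n. N - 1 / real (Suc n) < cmod (\<phi> (y n))" by metis
  have yN: "cmod (\<phi> (y n)) \<le> N" for n using leN[of "y n"] y(1)[of n] Npos
    by (smt (verit) mult_left_le)
  have dist_bd: "(norm (y n - y m))^2 \<le> 4 * ((1 / real (Suc n) + 1 / real (Suc m)) / N)" for n m
  proof -
    define d where "d = (1 / real (Suc n) + 1 / real (Suc m)) / N"
    have d0: "d \<ge> 0" using Npos by (simp add: d_def)
    have par: "(norm (y n - y m))^2 = 2 * (norm (y n))^2 + 2 * (norm (y m))^2 - (norm (y n + y m))^2"
      using norm_add_sq[of "y n" "y m"] norm_diff_sq[of "y n" "y m"] by simp
    have sq1: "(norm (y n))^2 \<le> 1" "(norm (y m))^2 \<le> 1" using y(1) by (simp_all add: power_le_one)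
    have "\<phi> (y n + y m) = complex_of_real (cmod (\<phi> (y n)) + cmod (\<phi> (y m)))"
      using add y(2)[of n] y(2)[of m] by simp
    hence "cmod (\<phi> (y n) ) + cmod (\<phi> (y m)) \<le> N * norm (y n + y m)"
      using leN[of "y n + y m"] by (metis of_real_add norm_of_real abs_of_nonneg norm_ge_zero add_nonneg_nonneg)
    moreover have "cmod (\<phi> (y n)) + cmod (\<phi> (y m)) > N * (2 - d)"
    proof -
      have "N * (2 - d) = 2 * N - (1 / real (Suc n) + 1 / real (Suc m))"
        using Npos unfolding d_def by (simp add: right_diff_distrib)
      thus ?thesis using y(3)[of n] y(3)[of m] by linarith
    qed
    ultimately have s: "norm (y n + y m) > 2 - d" using Npos
      by (smt (verit) mult_le_cancel_left_pos)
    have "(norm (y n + y m))^2 \<ge> 4 - 4 * d"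
    proof (cases "2 - d \<ge> 0")
      case True
      hence "(2 - d)^2 \<le> (norm (y n + y m))^2" using s by (simp add: power_mono)
      moreover have "(2 - d)^2 \<ge> 4 - 4 * d" by (simp add: power2_eq_square algebra_simps)
      ultimately show ?thesis by linarith
    next
      case False thus ?thesis by (smt (verit) zero_le_power2)
    qed
    thus ?thesis using par sq1 unfolding d_def by linarith
  qed
  have cauchy: "Cauchy y"
  proof (rule metric_CauchyI)
    fix e :: real assume e: "e > 0"
    obtain M0 :: nat where M0: "8 / (N * e^2) < real M0" using reals_Archimedean2 by blast
    define M where "M = Suc M0"
    have M: "8 / (N * e^2) < real M" using M0 unfolding M_def by simp
    have Mpos: "real M > 0" unfolding M_def by simp
    show "\<exists>M. \<forall>m\<ge>M. \<forall>n\<ge>M. dist (y m) (y n) < e"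
    proof (intro exI[of _ M] allI impI)
      fix m n assume mn: "m \<ge> M" "n \<ge> M"
      have a1: "1 / real (Suc m) \<le> 1 / real M" "1 / real (Suc n) \<le> 1 / real M"
        using mn Mpos by (simp_all add: frac_le)
      hence "(1 / real (Suc m) + 1 / real (Suc n)) / N \<le> (2 / real M) / N"
        using Npos by (intro divide_right_mono) simp_all
      hence le1: "(norm (y m - y n))^2 \<le> 4 * ((2 / real M) / N)"
        using dist_bd[of m n] by linarith
      have "8 < real M * (N * e^2)" using M e Npos by (simp add: divide_less_eq mult.commute)
      hence "4 * ((2 / real M) / N) < e^2" using Npos Mpos by (simp add: field_simps)
      hence "(norm (y m - y n))^2 < e^2" using le1 by linarith
      hence "norm (y m - y n) < e" by (rule power_less_imp_less_base) (use e in simp)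
      thus "dist (y m) (y n) < e" by (simp add: dist_norm)
    qed
  qed
  then obtain u where u: "y \<longlonglongrightarrow> u" using Cauchy_convergent_iff convergent_def by blast
  have blphi: "bounded_linear \<phi>"
  proof
    fix x y :: 'a and r :: real
    show "\<phi> (x + y) = \<phi> x + \<phi> y" by (rule add)
    show "\<phi> (scaleR r x) = scaleR r (\<phi> x)" by (simp add: scaleR_scaleC sc scaleR_conv_of_real)
    show "\<exists>K. \<forall>x. norm (\<phi> x) \<le> norm x * K" using leN by (metis mult.commute)
  qed
  have t1: "(\<lambda>n. \<phi> (y n)) \<longlonglongrightarrow> \<phi> u" using bounded_linear.tendsto[OF blphi u] .
  have t2: "(\<lambda>n. cmod (\<phi> (y n))) \<longlonglongrightarrow> N"
  proof (rule real_tendsto_sandwich[of "\<lambda>n. N - 1 / real (Suc n)" _ _ "\<lambda>n. N"])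
    show "\<forall>\<^sub>F n in sequentially. N - 1 / real (Suc n) \<le> cmod (\<phi> (y n))"
      using y(3) by (intro always_eventually allI less_imp_le) 
    show "\<forall>\<^sub>F n in sequentially. cmod (\<phi> (y n)) \<le> N" using yN by auto
    show "(\<lambda>n. N - 1 / real (Suc n)) \<longlonglongrightarrow> N"
      using tendsto_diff[OF tendsto_const[of N] LIMSEQ_inverse_real_of_nat] by (simp add: divide_inverse)
    show "(\<lambda>n. N) \<longlonglongrightarrow> N" by simp
  qed
  have "(\<lambda>n. \<phi> (y n)) \<longlonglongrightarrow> complex_of_real N"
  proof -
    have "(\<lambda>n. complex_of_real (cmod (\<phi> (y n)))) \<longlonglongrightarrow> complex_of_real N"
      by (rule tendsto_of_real[OF t2])
    moreover have "(\<lambda>n. \<phi> (y n)) = (\<lambda>n. complex_of_real (cmod (\<phi> (y n))))"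
      using y(2) by (rule ext)
    ultimately show ?thesis by simp
  qed
  hence phiu: "\<phi> u = complex_of_real N" using t1 LIMSEQ_unique by blast
  have nu1: "norm u \<le> 1"
    by (rule LIMSEQ_le_const2[OF tendsto_norm[OF u]]) (use y(1) in auto)
  have "N \<le> N * norm u" using leN[of u] phiu Npos by simp
  hence "norm u \<ge> 1" using Npos by simp
  hence nu: "norm u = 1" using nu1 by simp
  have uu: "cinner u u = 1" using nu by (simp add: cinner_self)
  have orth: "\<phi> v = 0" if v: "cinner u v = 0" for v
  proof (rule ccontr)
    assume nz: "\<phi> v \<noteq> 0"
    define w where "w = scaleC (cnj (\<phi> v)) v"
    define c where "c = (cmod (\<phi> v))^2"
    have c0: "c > 0" using nz by (simp add: c_def)
    have pw: "\<phi> w = complex_of_real c" by (simp add: w_def sc c_def cnj_mult_self)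
    have uw: "cinner u w = 0" by (simp add: w_def cinner_scaleC_right v)
    define t where "t = c / (N * ((norm w)^2 + 1))"
    have t0: "t > 0" unfolding t_def
      by (rule divide_pos_pos[OF c0 mult_pos_pos[OF Npos]]) (simp add: add_nonneg_pos)
    define z where "z = u + scaleC (complex_of_real t) w"
    have pz: "\<phi> z = complex_of_real (N + t * c)"
      by (simp add: z_def add sc phiu pw)
    have "cmod (\<phi> z) = N + t * c" unfolding pz norm_of_real using c0 t0 Npos by simp
    hence "N + t * c \<le> N * norm z"
      using leN[of z] by simp
    hence "(N + t * c)^2 \<le> (N * norm z)^2"
      using c0 t0 Npos by (intro power_mono) simp_all
    also have "(norm z)^2 = 1 + t^2 * (norm w)^2"
      using norm_add_sq[of u "scaleC (complex_of_real t) w"] nu t0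
      by (simp add: z_def norm_scaleC cinner_scaleC_right uw power_mult_distrib)
    hence "(N * norm z)^2 = N^2 + N^2 * t^2 * (norm w)^2"
      by (simp add: power_mult_distrib distrib_left)
    finally have "N^2 + 2 * N * t * c + t^2 * c^2 \<le> N^2 + N^2 * t^2 * (norm w)^2"
      by (simp add: power2_sum power_mult_distrib)
    moreover have "t^2 * c^2 \<ge> 0" by simp
    ultimately have "2 * N * t * c \<le> N^2 * t^2 * (norm w)^2" by linarith
    hence "(N * t) * (2 * c) \<le> (N * t) * (N * t * (norm w)^2)"
      by (simp add: power2_eq_square mult_ac)
    hence "2 * c \<le> N * t * (norm w)^2" using t0 Npos
      by (simp add: mult_le_cancel_left_pos)
    also have "N * t * (norm w)^2 = c * ((norm w)^2 / ((norm w)^2 + 1))"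
      using Npos by (simp add: t_def)
    also have "\<dots> \<le> c * 1" 
    proof (intro mult_left_mono)
      have "(norm w)^2 + 1 > 0" by (simp add: add_nonneg_pos)
      thus "(norm w)^2 / ((norm w)^2 + 1) \<le> 1" by (simp add: divide_le_eq)
    qed (use c0 in simp)
    finally show False using c0 by simp
  qed
  show ?thesis
  proof (intro exI[of _ "scaleC (complex_of_real N) u"] allI)
    fix x
    define v where "v = x - scaleC (cinner u x) u"
    have "cinner u v = 0" by (simp add: v_def cinner_diff_right cinner_scaleC_right uu)
    hence "\<phi> v = 0" by (rule orth)
    moreover have "x = v + scaleC (cinner u x) u" by (simp add: v_def)
    ultimately have "\<phi> x = cinner u x * complex_of_real N" by (metis add sc phiu add_0)
    thus "\<phi> x = cinner (scaleC (complex_of_real N) u) x" by (simp add: cinner_scaleC_left mult.commute)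
  qed
qed

lemma adj_exists:
  assumes T: "bounded_op (T::'a::chilbert_space \<Rightarrow> 'a)"
  shows "\<exists>S. \<forall>x y. cinner (T x) y = cinner x (S y)"
proof -
  obtain K where K: "K > 0" "\<And>x. norm (T x) \<le> K * norm x" using bounded_op_bound[OF T] by blast
  have "\<exists>z. \<forall>x. cinner (T x) y = cinner x z" for y
  proof -
    have "\<exists>z. \<forall>x. cinner y (T x) = cinner z x"
    proof (rule riesz)
      show "cinner y (T (x1 + x2)) = cinner y (T x1) + cinner y (T x2)" for x1 x2
        by (simp add: bounded_opD[OF T] cinner_add_right)
      show "cinner y (T (scaleC c x)) = c * cinner y (T x)" for c x
        by (simp add: bounded_opD[OF T] cinner_scaleC_right)
      show "cmod (cinner y (T x)) \<le> (norm y * K) * norm x" for x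
      proof -
        have "cmod (cinner y (T x)) \<le> norm y * norm (T x)" by (rule cauchy_schwarz)
        also have "\<dots> \<le> norm y * (K * norm x)" by (rule mult_left_mono[OF K(2)]) simp
        finally show ?thesis by (simp add: mult.assoc)
      qed
    qed
    then obtain z where "\<forall>x. cinner y (T x) = cinner z x" by blast
    hence "\<forall>x. cinner (T x) y = cinner x z" by (metis cinner_commute)
    thus ?thesis by blast
  qed
  hence "\<forall>y. \<exists>z. \<forall>x. cinner (T x) y = cinner x z" by blast
  from choice[OF this] obtain S where "\<forall>y x. cinner (T x) y = cinner x (S y)" by blast
  thus ?thesis by blast
qed

lemma adj_prop: "bounded_op (T::'a::chilbert_space \<Rightarrow> 'a) \<Longrightarrow> cinner (T x) y = cinner x (adj T y)"
  unfolding adj_def using someI_ex[OF adj_exists] by blast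

lemma adj_prop': "bounded_op (T::'a::chilbert_space \<Rightarrow> 'a) \<Longrightarrow> cinner (adj T x) y = cinner x (T y)"
  by (metis adj_prop cinner_commute)

lemma adj_unique:
  assumes "\<And>x y. cinner (T x) y = cinner x (S y)"
  shows "adj T = (S::'a::complex_inner \<Rightarrow> 'a)"
proof -
  have ex: "\<exists>S. \<forall>x y. cinner (T x) y = cinner x (S y)" using assms by blast
  have "\<forall>x y. cinner (T x) y = cinner x (adj T y)" unfolding adj_def using someI_ex[OF ex] by blast
  hence "cinner x (adj T y) = cinner x (S y)" for x y using assms by metis
  thus ?thesis by (intro ext cinner_ext_right) blast
qed

lemma adj_bounded:
  assumes T: "bounded_op (T::'a::chilbert_space \<Rightarrow> 'a)"
  shows "bounded_op (adj T)"
proof -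
  obtain K where K: "K > 0" "\<And>x. norm (T x) \<le> K * norm x" using bounded_op_bound[OF T] by blast
  have a: "adj T (x + y) = adj T x + adj T y" for x y
    by (rule cinner_ext_right) (simp add: adj_prop[OF T, symmetric] cinner_add_right)
  have s: "adj T (scaleC c x) = scaleC c (adj T x)" for c x
    by (rule cinner_ext_right) (simp add: adj_prop[OF T, symmetric] cinner_scaleC_right)
  have b: "norm (adj T y) \<le> K * norm y" for y
  proof -
    have "(norm (adj T y))^2 = Re (cinner (adj T y) (adj T y))" by (simp add: cinner_self_Re)
    also have "\<dots> = Re (cinner (T (adj T y)) y)" by (simp add: adj_prop[OF T])
    also have "\<dots> \<le> cmod (cinner (T (adj T y)) y)" by (rule complex_Re_le_cmod)
    also have "\<dots> \<le> norm (T (adj T y)) * norm y" by (rule cauchy_schwarz)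
    also have "\<dots> \<le> K * norm (adj T y) * norm y" using K(2) by (simp add: mult_right_mono)
    finally have "norm (adj T y) * norm (adj T y) \<le> norm (adj T y) * (K * norm y)"
      by (simp add: power2_eq_square mult_ac)
    thus ?thesis
      by (cases "adj T y = 0") (use K in \<open>simp_all add: mult_le_cancel_left_pos\<close>)
  qed
  show ?thesis unfolding bounded_op_def clinear_op_def using a s b by blast
qed

lemma adj_adj: "bounded_op (T::'a::chilbert_space \<Rightarrow> 'a) \<Longrightarrow> adj (adj T) = T"
  by (rule adj_unique) (simp add: adj_prop')

lemma adj_comp:
  assumes "bounded_op (S::'a::chilbert_space \<Rightarrow> 'a)" "bounded_op T"
  shows "adj (S \<circ> T) = adj T \<circ> adj S"
  by (rule adj_unique) (simp add: adj_prop[OF assms(1)] adj_prop[OF assms(2)])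

section \<open>Projections\<close>

lemma proj_bounded: "is_projection P \<Longrightarrow> bounded_op P"
  unfolding is_projection_def by simp

lemma proj_idem: "is_projection P \<Longrightarrow> P (P x) = P x"
  unfolding is_projection_def by (metis comp_apply)

lemma proj_sa: "is_projection (P::'a::chilbert_space \<Rightarrow> 'a) \<Longrightarrow> cinner (P x) y = cinner x (P y)"
  using adj_prop[of P x y] unfolding is_projection_def by simp

lemma proj_form: "is_projection (P::'a::chilbert_space \<Rightarrow> 'a) \<Longrightarrow> cinner x (P x) = complex_of_real ((norm (P x))^2)"
  by (metis cinner_self proj_idem proj_sa)

lemma proj_orth: "is_projection (P::'a::chilbert_space \<Rightarrow> 'a) \<Longrightarrow> cinner (P x) (x - P x) = 0"
  by (simp add: cinner_diff_right proj_sa[of P] proj_idem)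

lemma proj_norm_sq: "is_projection (P::'a::chilbert_space \<Rightarrow> 'a) \<Longrightarrow> (norm x)^2 = (norm (P x))^2 + (norm (x - P x))^2"
  using norm_add_sq[of "P x" "x - P x"] proj_orth[of P x] by simp

lemma proj_norm_le: "is_projection (P::'a::chilbert_space \<Rightarrow> 'a) \<Longrightarrow> norm (P x) \<le> norm x"
proof -
  assume P: "is_projection P"
  have "(norm (P x))^2 \<le> (norm x)^2" using proj_norm_sq[OF P, of x] by simp
  thus ?thesis by (simp add: power_mono_iff)
qed

lemma op_le_proj_iff:
  assumes P: "is_projection (P::'a::chilbert_space \<Rightarrow> 'a)" and Q: "is_projection Q"
  shows "op_le P Q \<longleftrightarrow> (\<forall>x. norm (P x) \<le> norm (Q x))"
proof -
  have f: "cinner x (Q x - P x) = complex_of_real ((norm (Q x))^2 - (norm (P x))^2)" for x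
    by (simp add: cinner_diff_right proj_form[OF P] proj_form[OF Q])
  have bd: "bounded_op (\<lambda>x. Q x - P x)" by (rule bounded_op_diff_op[OF proj_bounded[OF Q] proj_bounded[OF P]])
  have "op_le P Q \<longleftrightarrow> (\<forall>x. (norm (P x))^2 \<le> (norm (Q x))^2)"
    unfolding op_le_def positive_op_def using bd f by simp
  also have "\<dots> \<longleftrightarrow> (\<forall>x. norm (P x) \<le> norm (Q x))"
    by (simp add: power_mono_iff)
  finally show ?thesis .
qed

lemma proj_le_comp1:
  assumes P: "is_projection (P::'a::chilbert_space \<Rightarrow> 'a)" and Q: "is_projection Q"
    and le: "\<And>x. norm (P x) \<le> norm (Q x)"
  shows "Q (P x) = P x"
proof -
  have "(norm (P x))^2 = (norm (Q (P x)))^2 + (norm (P x - Q (P x)))^2" by (rule proj_norm_sq[OF Q])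
  hence "(norm (P x - Q (P x)))^2 = (norm (P x))^2 - (norm (Q (P x)))^2" by simp
  moreover have "norm (P x) \<le> norm (Q (P x))" using le[of "P x"] proj_idem[OF P] by simp
  moreover have "(norm (P x))^2 \<le> (norm (Q (P x)))^2" using calculation(2) by (simp add: power_mono)
  ultimately have "(norm (P x - Q (P x)))^2 \<le> 0" by linarith
  thus "Q (P x) = P x" by simp
qed

lemma proj_le_comp2:
  assumes P: "is_projection (P::'a::chilbert_space \<Rightarrow> 'a)" and Q: "is_projection Q"
    and le: "\<And>x. norm (P x) \<le> norm (Q x)"
  shows "P (Q x) = P x"
proof (rule cinner_ext_left)
  fix y
  have "cinner (P (Q x)) y = cinner x (Q (P y))" by (simp add: proj_sa[OF P] proj_sa[OF Q])
  also have "\<dots> = cinner x (P y)" using proj_le_comp1[OF P Q le] by simp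
  finally show "cinner (P (Q x)) y = cinner (P x) y" by (simp add: proj_sa[OF P])
qed

lemma proj_le_diff:
  assumes P: "is_projection (P::'a::chilbert_space \<Rightarrow> 'a)" and Q: "is_projection Q"
    and le: "\<And>x. norm (P x) \<le> norm (Q x)"
  shows "(norm (Q x - P x))^2 = (norm (Q x))^2 - (norm (P x))^2"
proof -
  have "cinner (Q x) (P x) = cinner x (Q (P x))" by (simp add: proj_sa[OF Q])
  also have "\<dots> = cinner x (P x)" using proj_le_comp1[OF P Q le] by simp
  also have "\<dots> = complex_of_real ((norm (P x))^2)" by (rule proj_form[OF P])
  finally show ?thesis using norm_diff_sq[of "Q x" "P x"] by simp
qed

lemma mono_proj_lim:
  fixes P :: "nat \<Rightarrow> 'a::chilbert_space \<Rightarrow> 'a"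
  assumes proj: "\<And>n. is_projection (P n)"
    and mono: "\<And>n x. norm (P n x) \<le> norm (P (Suc n) x)"
  shows "(\<lambda>n. P n x) \<longlonglongrightarrow> lim (\<lambda>n. P n x)"
proof -
  have monoN: "norm (P n y) \<le> norm (P m y)" if "n \<le> m" for n m y
    using lift_Suc_mono_le[of "\<lambda>n. norm (P n y)", OF _ that] mono by blast
  define a where "a n = (norm (P n x))^2" for n
  have inc: "incseq a" unfolding incseq_def a_def by (intro allI impI power_mono monoN) simp_all
  have bd: "\<forall>n. a n \<le> (norm x)^2" unfolding a_def by (intro allI power_mono proj_norm_le[OF proj]) simp
  obtain L where "a \<longlonglongrightarrow> L" using incseq_convergent[OF inc bd] by blast
  hence "convergent a" unfolding convergent_def by blast
  hence ca: "Cauchy a" by (rule convergent_Cauchy)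
  have "Cauchy (\<lambda>n. P n x)"
  proof (rule metric_CauchyI)
    fix e :: real assume e: "e > 0"
    hence "e^2 > 0" by simp
    then obtain M where M: "\<And>m n. m \<ge> M \<Longrightarrow> n \<ge> M \<Longrightarrow> dist (a m) (a n) < e^2"
      using ca unfolding Cauchy_def by blast
    have d: "dist (P m x) (P n x) < e" if "m \<ge> M" "n \<ge> M" "n \<le> m" for m n
    proof -
      have "(norm (P m x - P n x))^2 = a m - a n"
        unfolding a_def by (rule proj_le_diff[OF proj proj]) (use monoN[OF \<open>n \<le> m\<close>] in blast)
      also have "\<dots> < e^2" using M[OF that(1,2)] by (simp add: dist_real_def)
      finally have "norm (P m x - P n x) < e" by (rule power_less_imp_less_base) (use e in simp)
      thus ?thesis by (simp add: dist_norm)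
    qed
    show "\<exists>M. \<forall>m\<ge>M. \<forall>n\<ge>M. dist (P m x) (P n x) < e"
    proof (intro exI[of _ M] allI impI)
      fix m n assume "m \<ge> M" "n \<ge> M"
      show "dist (P m x) (P n x) < e"
      proof (cases "n \<le> m")
        case True thus ?thesis using d \<open>m \<ge> M\<close> \<open>n \<ge> M\<close> by blast
      next
        case False
        hence "dist (P n x) (P m x) < e" using d \<open>m \<ge> M\<close> \<open>n \<ge> M\<close> by simp
        thus ?thesis by (simp add: dist_commute)
      qed
    qed
  qed
  hence "convergent (\<lambda>n. P n x)" by (rule Cauchy_convergent)
  thus ?thesis by (simp add: convergent_LIMSEQ_iff)
qed

lemma mono_proj_lim_props:
  fixes P :: "nat \<Rightarrow> 'a::chilbert_space \<Rightarrow> 'a"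
  assumes proj: "\<And>n. is_projection (P n)"
    and mono: "\<And>n x. norm (P n x) \<le> norm (P (Suc n) x)"
    and Qdef: "Q = (\<lambda>x. lim (\<lambda>n. P n x))"
  shows "\<And>x. (\<lambda>n. P n x) \<longlonglongrightarrow> Q x"
    and "is_projection Q"
    and "\<And>n x. norm (P n x) \<le> norm (Q x)"
    and "\<And>T. bounded_op T \<Longrightarrow> (\<And>n. T \<circ> P n = P n \<circ> T) \<Longrightarrow> T \<circ> Q = Q \<circ> T"
proof -
  show lim: "(\<lambda>n. P n x) \<longlonglongrightarrow> Q x" for x unfolding Qdef by (rule mono_proj_lim[of P, OF proj mono])
  have monoN: "norm (P n x) \<le> norm (P m x)" if "n \<le> m" for n m x
    using lift_Suc_mono_le[of "\<lambda>n. norm (P n x)", OF _ that] mono by blast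
  have bP: "bounded_op (P n)" for n using proj proj_bounded by blast
  show le: "norm (P n x) \<le> norm (Q x)" for n x
    by (rule LIMSEQ_le_const[OF tendsto_norm[OF lim]]) (use monoN in blast)
  have add: "Q (x + y) = Q x + Q y" for x y
  proof -
    have "(\<lambda>n. P n (x + y)) \<longlonglongrightarrow> Q x + Q y"
      using tendsto_add[OF lim[of x] lim[of y]] by (simp add: bounded_opD[OF bP])
    thus ?thesis using lim[of "x+y"] LIMSEQ_unique by blast
  qed
  have bsc: "bounded_op (\<lambda>x. scaleC c (x::'a))" for c
    using bounded_op_scale[OF bounded_op_id, of c] by (simp add: op_scale_def)
  have sc: "Q (scaleC c x) = scaleC c (Q x)" for c x
  proof -
    have "(\<lambda>n. P n (scaleC c x)) \<longlonglongrightarrow> scaleC c (Q x)"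
      using bounded_op_tendsto[OF bsc lim[of x]] by (simp add: bounded_opD[OF bP])
    thus ?thesis using lim[of "scaleC c x"] LIMSEQ_unique by blast
  qed
  have nQ: "norm (Q x) \<le> 1 * norm x" for x
    using LIMSEQ_le_const2[OF tendsto_norm[OF lim]] proj_norm_le[OF proj] by simp
  have bQ: "bounded_op Q" unfolding bounded_op_def clinear_op_def
    using add sc nQ by (intro conjI allI exI[of _ 1]) auto
  have sa: "cinner (Q x) y = cinner x (Q y)" for x y
  proof -
    have "(\<lambda>n. cinner (P n x) y) \<longlonglongrightarrow> cinner (Q x) y" by (intro tendsto_intros lim)
    moreover have "(\<lambda>n. cinner (P n x) y) \<longlonglongrightarrow> cinner x (Q y)"
      using tendsto_cinner[OF tendsto_const lim[of y], of x] proj_sa[OF proj] by simp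
    ultimately show ?thesis using LIMSEQ_unique by blast
  qed
  have adjQ: "adj Q = Q" by (rule adj_unique) (rule sa)
  have PQ: "P n (Q x) = P n x" for n x
  proof -
    have l1: "(\<lambda>m. P n (P m x)) \<longlonglongrightarrow> P n (Q x)" by (rule bounded_op_tendsto[OF bP lim])
    have l2: "eventually (\<lambda>m. P n (P m x) = P n x) sequentially"
      unfolding eventually_sequentially
    proof (intro exI[of _ n] allI impI)
      fix m assume "n \<le> m"
      hence "\<And>y. norm (P n y) \<le> norm (P m y)" by (rule monoN)
      thus "P n (P m x) = P n x" by (rule proj_le_comp2[OF proj proj])
    qed
    have "(\<lambda>m. P n x) \<longlonglongrightarrow> P n (Q x)" by (rule Lim_transform_eventually[OF l1 l2])
    from LIMSEQ_unique[OF tendsto_const this] show ?thesis by simp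
  qed
  have QQ: "Q (Q x) = Q x" for x
  proof -
    have "(\<lambda>n. P n (Q x)) = (\<lambda>n. P n x)" using PQ by (rule ext)
    hence "(\<lambda>n. P n x) \<longlonglongrightarrow> Q (Q x)" using lim[of "Q x"] by simp
    thus ?thesis using lim[of x] LIMSEQ_unique by blast
  qed
  have "Q \<circ> Q = Q" using QQ by (simp add: fun_eq_iff)
  thus "is_projection Q" unfolding is_projection_def using bQ adjQ by blast
  show "T \<circ> Q = Q \<circ> T" if T: "bounded_op T" and comm: "\<And>n. T \<circ> P n = P n \<circ> T" for T
  proof
    fix x
    have "(\<lambda>n. T (P n x)) \<longlonglongrightarrow> T (Q x)" by (rule bounded_op_tendsto[OF T lim])
    moreover have "(\<lambda>n. T (P n x)) = (\<lambda>n. P n (T x))"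
    proof
      fix n show "T (P n x) = P n (T x)" using fun_cong[OF comm[of n], of x] by simp
    qed
    ultimately have "(\<lambda>n. P n (T x)) \<longlonglongrightarrow> T (Q x)" by simp
    hence "T (Q x) = Q (T x)" using lim[of "T x"] LIMSEQ_unique by blast
    thus "(T \<circ> Q) x = (Q \<circ> T) x" by simp
  qed
qed

definition seq_closed :: "('a::chilbert_space \<Rightarrow> 'a) set \<Rightarrow> bool" where
  "seq_closed S \<longleftrightarrow> (\<forall>P. (\<forall>n. P n \<in> S \<and> is_projection (P n)) \<and>
      (\<forall>n x. norm (P n x) \<le> norm (P (Suc n) x)) \<longrightarrow> (\<lambda>x. lim (\<lambda>n. P n x)) \<in> S)"

lemma commutant_anti: "S \<subseteq> T \<Longrightarrow> commutant T \<subseteq> commutant S"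
  unfolding commutant_def by blast

lemma subset_commutant2: "(\<forall>T\<in>S. bounded_op T) \<Longrightarrow> S \<subseteq> commutant (commutant S)"
  unfolding commutant_def by auto

lemma commutant_star:
  fixes S :: "('a::chilbert_space \<Rightarrow> 'a) set"
  assumes S: "\<And>T. T \<in> S \<Longrightarrow> bounded_op T \<and> adj T \<in> S"
  shows "star_subalgebra (commutant S)" "\<And>T. T \<in> commutant S \<Longrightarrow> adj T \<in> commutant S"
proof -
  have bS: "bounded_op A" if "A \<in> S" for A using S that by blast
  show adjc: "adj T \<in> commutant S" if T: "T \<in> commutant S" for T
  proof -
    have bT: "bounded_op T" using T unfolding commutant_def by blast
    have "adj T \<circ> A = A \<circ> adj T" if A: "A \<in> S" for A
    proof -
      have bA: "bounded_op A" using bS[OF A] .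
      have aA: "adj A \<in> S" using S A by blast
      have baA: "bounded_op (adj A)" by (rule adj_bounded[OF bA])
      have c: "T \<circ> adj A = adj A \<circ> T" using T aA unfolding commutant_def by blast
      have "adj T \<circ> A = adj T \<circ> adj (adj A)" by (simp add: adj_adj[OF bA])
      also have "\<dots> = adj (adj A \<circ> T)" by (rule adj_comp[OF baA bT, symmetric])
      also have "\<dots> = adj (T \<circ> adj A)" using c by simp
      also have "\<dots> = adj (adj A) \<circ> adj T" by (rule adj_comp[OF bT baA])
      also have "\<dots> = A \<circ> adj T" by (simp add: adj_adj[OF bA])
      finally show ?thesis .
    qed
    thus ?thesis unfolding commutant_def using adj_bounded[OF bT] by blast
  qed
  show "star_subalgebra (commutant S)"
    unfolding star_subalgebra_def
  proof (intro conjI ballI allI)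
    fix T assume "T \<in> commutant S" thus "bounded_op T" unfolding commutant_def by blast
  next
    fix T assume "T \<in> commutant S" thus "adj T \<in> commutant S" by (rule adjc)
  next
    fix T1 T2 assume T1: "T1 \<in> commutant S" and T2: "T2 \<in> commutant S"
    have b1: "bounded_op T1" and b2: "bounded_op T2" using T1 T2 unfolding commutant_def by auto
    have "op_add T1 T2 \<circ> A = A \<circ> op_add T1 T2" if A: "A \<in> S" for A
    proof
      fix x
      have c1: "T1 \<circ> A = A \<circ> T1" and c2: "T2 \<circ> A = A \<circ> T2"
        using T1 T2 A unfolding commutant_def by auto
      have "T1 (A x) = A (T1 x)" "T2 (A x) = A (T2 x)"
        using fun_cong[OF c1, of x] fun_cong[OF c2, of x] by simp_all
      thus "(op_add T1 T2 \<circ> A) x = (A \<circ> op_add T1 T2) x"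
        by (simp add: op_add_def bounded_opD[OF bS[OF A]])
    qed
    moreover have "bounded_op (op_add T1 T2)" unfolding op_add_def by (rule bounded_op_add[OF b1 b2])
    ultimately show "op_add T1 T2 \<in> commutant S" unfolding commutant_def by blast
    have "T1 \<circ> T2 \<circ> A = A \<circ> (T1 \<circ> T2)" if A: "A \<in> S" for A
    proof -
      have c1: "T1 \<circ> A = A \<circ> T1" and c2: "T2 \<circ> A = A \<circ> T2"
        using T1 T2 A unfolding commutant_def by auto
      have "T1 (A y) = A (T1 y)" "T2 (A y) = A (T2 y)" for y
        using fun_cong[OF c1, of y] fun_cong[OF c2, of y] by simp_all
      thus ?thesis by (simp add: fun_eq_iff)
    qed
    moreover have "bounded_op (T1 \<circ> T2)" by (rule bounded_op_comp[OF b1 b2])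
    ultimately show "T1 \<circ> T2 \<in> commutant S" unfolding commutant_def by blast
  next
    fix c T assume T: "T \<in> commutant S"
    have b: "bounded_op T" using T unfolding commutant_def by auto
    have "op_scale c T \<circ> A = A \<circ> op_scale c T" if A: "A \<in> S" for A
    proof
      fix x
      have c1: "T \<circ> A = A \<circ> T" using T A unfolding commutant_def by auto
      have "T (A x) = A (T x)" using fun_cong[OF c1, of x] by simp
      thus "(op_scale c T \<circ> A) x = (A \<circ> op_scale c T) x"
        by (simp add: op_scale_def bounded_opD[OF bS[OF A]])
    qed
    moreover have "bounded_op (op_scale c T)" by (rule bounded_op_scale[OF b])
    ultimately show "op_scale c T \<in> commutant S" unfolding commutant_def by blast
  qed
qed

lemma lim_in_vna:
  fixes M :: "('a::chilbert_space \<Rightarrow> 'a) set"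
  assumes vna: "von_neumann_algebra M"
    and P: "\<And>n. P n \<in> M" "\<And>n. is_projection (P n)"
    and mono: "\<And>n x. norm (P n x) \<le> norm (P (Suc n) x)"
  shows "(\<lambda>x. lim (\<lambda>n. P n x)) \<in> M"
proof -
  define Q where "Q = (\<lambda>x. lim (\<lambda>n. P n x))"
  note props = mono_proj_lim_props[OF P(2) mono Q_def]
  have "Q \<in> commutant (commutant M)"
  proof -
    have "Q \<circ> T = T \<circ> Q" if T: "T \<in> commutant M" for T
    proof -
      have bT: "bounded_op T" using T unfolding commutant_def by blast
      have "T \<circ> P n = P n \<circ> T" for n using T P(1) unfolding commutant_def by blast
      hence "T \<circ> Q = Q \<circ> T" by (rule props(4)[OF bT])
      thus ?thesis by simp
    qed
    thus ?thesis unfolding commutant_def using proj_bounded[OF props(2)] by blast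
  qed
  thus ?thesis using vna unfolding von_neumann_algebra_def Q_def by simp
qed

lemma seq_closed_vna: "von_neumann_algebra M \<Longrightarrow> seq_closed M"
  unfolding seq_closed_def using lim_in_vna by blast

lemma seq_closed_masa:
  fixes M A :: "('a::chilbert_space \<Rightarrow> 'a) set"
  assumes vna: "von_neumann_algebra M" and masa: "masa M A"
  shows "seq_closed A"
  unfolding seq_closed_def
proof (intro allI impI)
  fix P :: "nat \<Rightarrow> 'a \<Rightarrow> 'a"
  assume asm: "(\<forall>n. P n \<in> A \<and> is_projection (P n)) \<and> (\<forall>n x. norm (P n x) \<le> norm (P (Suc n) x))"
  have PA: "\<And>n. P n \<in> A" and Pp: "\<And>n. is_projection (P n)"
    and mono: "\<And>n x. norm (P n x) \<le> norm (P (Suc n) x)" using asm by auto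
  define Q where "Q = (\<lambda>x. lim (\<lambda>n. P n x))"
  note props = mono_proj_lim_props[OF Pp mono Q_def]
  have abA: "abelian_star_subalgebra_of M A" using masa unfolding masa_def by blast
  have AM: "A \<subseteq> M" and sA: "star_subalgebra A" and comA: "\<And>S T. S \<in> A \<Longrightarrow> T \<in> A \<Longrightarrow> S \<circ> T = T \<circ> S"
    using abA unfolding abelian_star_subalgebra_of_def by auto
  have bA: "\<And>T. T \<in> A \<Longrightarrow> bounded_op T" and adjA: "\<And>T. T \<in> A \<Longrightarrow> adj T \<in> A"
    using sA unfolding star_subalgebra_def by auto
  have QM: "Q \<in> M" unfolding Q_def by (rule lim_in_vna[of M P, OF vna _ Pp mono]) (use PA AM in blast)
  have Qp: "is_projection Q" by (rule props(2))
  have QA: "S \<circ> Q = Q \<circ> S" if "S \<in> A" for S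
    by (rule props(4)[OF bA[OF that]]) (use comA PA that in blast)
  define C where "C = insert Q A"
  have Cb: "\<And>T. T \<in> C \<Longrightarrow> bounded_op T \<and> adj T \<in> C"
    using bA adjA Qp unfolding C_def is_projection_def by auto
  define B where "B = commutant (commutant C)"
  have CC: "C \<subseteq> commutant C"
    unfolding commutant_def C_def using bA proj_bounded[OF Qp] comA QA by auto
  have Cc2: "C \<subseteq> B" unfolding B_def by (rule subset_commutant2) (use Cb in blast)
  have c1: "\<And>T. T \<in> commutant C \<Longrightarrow> bounded_op T \<and> adj T \<in> commutant C"
    using commutant_star(2)[OF Cb] unfolding commutant_def by blast
  have starB: "star_subalgebra B" unfolding B_def by (rule commutant_star(1)[OF c1])
  have BC: "B \<subseteq> commutant C" unfolding B_def by (rule commutant_anti[OF CC])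
  have abB: "\<forall>S\<in>B. \<forall>T\<in>B. S \<circ> T = T \<circ> S"
  proof (intro ballI)
    fix S T assume S: "S \<in> B" and T: "T \<in> B"
    have "T \<in> commutant C" using T BC by blast
    thus "S \<circ> T = T \<circ> S" using S unfolding B_def commutant_def by blast
  qed
  have CM: "C \<subseteq> M" unfolding C_def using QM AM by blast
  have BM: "B \<subseteq> M"
  proof -
    have "B \<subseteq> commutant (commutant M)" unfolding B_def
      by (rule commutant_anti[OF commutant_anti[OF CM]])
    thus ?thesis using vna unfolding von_neumann_algebra_def by simp
  qed
  have "abelian_star_subalgebra_of M B" unfolding abelian_star_subalgebra_of_def using BM starB abB by blast
  moreover have "A \<subseteq> B" using Cc2 unfolding C_def by blast
  ultimately have "B = A" using masa unfolding masa_def by blast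
  thus "Q \<in> A" using Cc2 unfolding C_def by blast
qed

definition rc :: "(real \<Rightarrow> 'b::metric_space) \<Rightarrow> real \<Rightarrow> real \<Rightarrow> bool" where
  "rc f l u \<longleftrightarrow> (\<forall>e>0. \<exists>d>0. \<forall>m\<in>{l..u}. m < l + d \<longrightarrow> dist (f m) (f l) < e)"

lemma tendsto_rc:
  assumes "(f \<longlongrightarrow> f l) (at l within {l..u})"
  shows "rc f l u"
  unfolding rc_def
proof (intro allI impI)
  fix e :: real assume e: "e > 0"
  have "eventually (\<lambda>m. dist (f m) (f l) < e) (at l within {l..u})"
    using assms e tendsto_iff by blast
  then obtain d where d: "d > 0" "\<And>m. m \<in> {l..u} \<Longrightarrow> m \<noteq> l \<Longrightarrow> dist m l < d \<Longrightarrow> dist (f m) (f l) < e"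
    unfolding eventually_at by blast
  show "\<exists>d>0. \<forall>m\<in>{l..u}. m < l + d \<longrightarrow> dist (f m) (f l) < e"
  proof (intro exI[of _ d] conjI ballI impI)
    fix m assume m: "m \<in> {l..u}" "m < l + d"
    show "dist (f m) (f l) < e"
    proof (cases "m = l")
      case True thus ?thesis using e by simp
    next
      case False thus ?thesis using d(2)[OF m(1) False] m by (simp add: dist_real_def)
    qed
  qed (use d in simp)
qed

lemma rc_tendsto:
  assumes "rc f l u"
  shows "(f \<longlongrightarrow> f l) (at l within {l..u})"
  unfolding tendsto_iff
proof (intro allI impI)
  fix e :: real assume e: "e > 0"
  obtain d where d: "d > 0" "\<And>m. m \<in> {l..u} \<Longrightarrow> m < l + d \<Longrightarrow> dist (f m) (f l) < e"
    using assms e unfolding rc_def by blast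
  show "eventually (\<lambda>m. dist (f m) (f l) < e) (at l within {l..u})"
    unfolding eventually_at
    by (rule exI[of _ d]) (use d in \<open>auto simp: dist_real_def\<close>)
qed

lemma rc_comp:
  assumes f: "rc f l u" and h: "rc h (f l) v" and range: "\<And>m. m \<in> {l..u} \<Longrightarrow> f l \<le> f m \<and> f m \<le> v"
  shows "rc (\<lambda>m. h (f m)) l u"
  unfolding rc_def
proof (intro allI impI)
  fix e :: real assume e: "e > 0"
  obtain d1 where d1: "d1 > 0" "\<And>m. m \<in> {f l..v} \<Longrightarrow> m < f l + d1 \<Longrightarrow> dist (h m) (h (f l)) < e"
    using h e unfolding rc_def by blast
  obtain d where d: "d > 0" "\<And>m. m \<in> {l..u} \<Longrightarrow> m < l + d \<Longrightarrow> dist (f m) (f l) < d1"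
    using f d1(1) unfolding rc_def by blast
  show "\<exists>d>0. \<forall>m\<in>{l..u}. m < l + d \<longrightarrow> dist (h (f m)) (h (f l)) < e"
  proof (intro exI[of _ d] conjI ballI impI)
    fix m assume m: "m \<in> {l..u}" "m < l + d"
    have "f m \<in> {f l..v}" using range[OF m(1)] by simp
    moreover have "f m < f l + d1" using d(2)[OF m] range[OF m(1)] by (simp add: dist_real_def)
    ultimately show "dist (h (f m)) (h (f l)) < e" by (rule d1(2))
  qed (use d in simp)
qed

primrec Git :: "(nat \<Rightarrow> real \<Rightarrow> real) \<Rightarrow> nat \<Rightarrow> nat \<Rightarrow> real \<Rightarrow> real" where
  "Git g n 0 l = l"
| "Git g n (Suc j) l = g (n + j) (Git g n j l)"

lemma Git_shift: "Git g (Suc n) j (g n l) = Git g n (Suc j) l"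
  by (induction j) simp_all

locale cons =
  fixes M S :: "('a::chilbert_space \<Rightarrow> 'a) set" and a B :: real and c \<alpha> :: "nat \<Rightarrow> real"
    and D :: "nat \<Rightarrow> real \<Rightarrow> 'a \<Rightarrow> 'a" and g :: "nat \<Rightarrow> real \<Rightarrow> real"
  assumes alpha_pos: "\<And>n. \<alpha> n \<ge> 0"
    and alpha_sum: "summable \<alpha>"
    and c_le: "\<And>n. c n \<le> B"
    and c_lim: "c \<longlonglongrightarrow> B"
    and brsrD: "\<And>n. \<exists>p. brsr M a (c n) p (D n)"
    and ref: "\<And>n. strong_refinement a (c (Suc n)) (D (Suc n)) (g n) a (c n) (D n)"
    and gbd: "\<And>n l. l \<in> {a..c n} \<Longrightarrow> g n l - l \<le> \<alpha> n"
    and DS: "\<And>n l. l \<in> {a..c n} \<Longrightarrow> D n l \<in> S"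
    and SM: "S \<subseteq> M"
    and Sc: "seq_closed S"
begin

lemma a_le_c: "a \<le> c n" using brsrD[of n] unfolding brsr_def by auto

lemma g_in: "l \<in> {a..c n} \<Longrightarrow> g n l \<in> {a..c (Suc n)}"
  using ref[of n] unfolding strong_refinement_def by blast

lemma g_mono: "l \<in> {a..c n} \<Longrightarrow> m \<in> {a..c n} \<Longrightarrow> l \<le> m \<Longrightarrow> g n l \<le> g n m"
  using ref[of n] unfolding strong_refinement_def by (meson mono_onD)

lemma g_rc: "l \<in> {a..c n} \<Longrightarrow> rc (g n) l (c n)"
  using ref[of n] unfolding strong_refinement_def by (blast intro: tendsto_rc)

lemma g_end: "g n (c n) = c (Suc n)"
  using ref[of n] unfolding strong_refinement_def by blast

lemma g_D: "l \<in> {a..c n} \<Longrightarrow> D (Suc n) (g n l) = D n l"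
  using ref[of n] unfolding strong_refinement_def by auto

lemma g_ge: "l \<in> {a..c n} \<Longrightarrow> l \<le> g n l"
  using ref[of n] unfolding strong_refinement_def by auto

lemma g_slope: "l \<in> {a..c n} \<Longrightarrow> m \<in> {a..c n} \<Longrightarrow> m < l \<Longrightarrow> l - m \<le> g n l - g n m"
  using ref[of n] unfolding strong_refinement_def by auto

abbreviation "G \<equiv> Git g"

lemma G_in: "l \<in> {a..c n} \<Longrightarrow> G n j l \<in> {a..c (n + j)}"
proof (induction j)
  case 0 thus ?case by simp
next
  case (Suc j) thus ?case using g_in[OF Suc.IH[OF Suc.prems]] by simp
qed

lemma G_step: "l \<in> {a..c n} \<Longrightarrow> G n j l \<le> G n (Suc j) l \<and> G n (Suc j) l - G n j l \<le> \<alpha> (n + j)"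
  using g_ge[OF G_in] gbd[OF G_in] by simp

lemma G_D: "l \<in> {a..c n} \<Longrightarrow> D (n + j) (G n j l) = D n l"
  by (induction j) (simp_all add: g_D[OF G_in])

lemma G_end: "G n j (c n) = c (n + j)"
  by (induction j) (simp_all add: g_end)

lemma G_slope: "l \<in> {a..c n} \<Longrightarrow> m \<in> {a..c n} \<Longrightarrow> m < l \<Longrightarrow> l - m \<le> G n j l - G n j m"
proof (induction j)
  case 0 thus ?case by simp
next
  case (Suc j)
  have "l - m \<le> G n j l - G n j m" using Suc by blast
  hence lt: "G n j m < G n j l" using Suc.prems by linarith
  have "G n j l - G n j m \<le> G n (Suc j) l - G n (Suc j) m"
    using g_slope[OF G_in[OF Suc.prems(1)] G_in[OF Suc.prems(2)] lt] by simp
  thus ?case using Suc by linarith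
qed

lemma G_mono: "l \<in> {a..c n} \<Longrightarrow> m \<in> {a..c n} \<Longrightarrow> m \<le> l \<Longrightarrow> G n j m \<le> G n j l"
  using G_slope[of l n m j] by (cases "m = l") auto

lemma G_rc: "l \<in> {a..c n} \<Longrightarrow> rc (G n j) l (c n)"
proof (induction j)
  case 0
  show ?case unfolding rc_def
    by (intro allI impI, rule_tac x=e in exI) (auto simp: dist_real_def)
next
  case (Suc j)
  have "rc (\<lambda>m. g (n + j) (G n j m)) l (c n)"
  proof (rule rc_comp[OF Suc.IH[OF Suc.prems]])
    show "rc (g (n + j)) (G n j l) (c (n + j))" by (rule g_rc[OF G_in[OF Suc.prems]])
    fix m assume m: "m \<in> {l..c n}"
    hence m': "m \<in> {a..c n}" using Suc.prems by auto
    show "G n j l \<le> G n j m \<and> G n j m \<le> c (n + j)"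
      using G_mono[OF m' Suc.prems] m G_in[OF m'] by auto
  qed
  thus ?case by simp
qed

definition T :: "nat \<Rightarrow> real" where "T m = (\<Sum>i. \<alpha> (i + m))"

lemma T_nonneg: "T m \<ge> 0"
  unfolding T_def by (rule suminf_nonneg) (simp_all add: alpha_sum alpha_pos)

lemma T_small: "e > 0 \<Longrightarrow> \<exists>N. \<forall>m\<ge>N. T m < e"
  using suminf_exist_split[OF _ alpha_sum, of e] T_nonneg unfolding T_def
  by (metis abs_of_nonneg real_norm_def)

lemma G_diff: "l \<in> {a..c n} \<Longrightarrow> G n (j + d) l - G n j l \<le> (\<Sum>i<d. \<alpha> (i + (n + j)))"
proof (induction d)
  case 0 thus ?case by simp
next
  case (Suc d)
  have "G n (Suc (j + d)) l - G n (j + d) l \<le> \<alpha> (n + (j + d))" using G_step[OF Suc.prems] by blast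
  thus ?case using Suc by (simp add: add_ac)
qed

lemma G_diff_T: "l \<in> {a..c n} \<Longrightarrow> j \<le> k \<Longrightarrow> G n k l - G n j l \<le> T (n + j)"
proof -
  assume l: "l \<in> {a..c n}" and jk: "j \<le> k"
  obtain d where k: "k = j + d" using jk le_Suc_ex by blast
  have "G n k l - G n j l \<le> (\<Sum>i<d. \<alpha> (i + (n + j)))" using G_diff[OF l] k by simp
  also have "\<dots> \<le> T (n + j)" unfolding T_def
    by (rule sum_le_suminf) (simp_all add: alpha_sum alpha_pos)
  finally show ?thesis .
qed

lemma G_incr: "l \<in> {a..c n} \<Longrightarrow> j \<le> k \<Longrightarrow> G n j l \<le> G n k l"
  using lift_Suc_mono_le[of "\<lambda>j. G n j l"] G_step by blast

definition F :: "nat \<Rightarrow> real \<Rightarrow> real" where "F n l = lim (\<lambda>j. G n j l)"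

lemma F_lim: "l \<in> {a..c n} \<Longrightarrow> (\<lambda>j. G n j l) \<longlonglongrightarrow> F n l"
proof -
  assume l: "l \<in> {a..c n}"
  have "incseq (\<lambda>j. G n j l)" unfolding incseq_def using G_incr[OF l] by blast
  moreover have "\<forall>j. G n j l \<le> B" using G_in[OF l] c_le by (meson atLeastAtMost_iff order_trans)
  ultimately obtain L where "(\<lambda>j. G n j l) \<longlonglongrightarrow> L" using incseq_convergent by blast
  thus ?thesis unfolding F_def by (metis limI)
qed

lemma F_bounds: "l \<in> {a..c n} \<Longrightarrow> G n j l \<le> F n l \<and> F n l \<le> G n j l + T (n + j)"
proof -
  assume l: "l \<in> {a..c n}"
  have "G n j l \<le> F n l"
    by (rule LIMSEQ_le_const[OF F_lim[OF l]]) (use G_incr[OF l] in blast)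
  moreover have "F n l \<le> G n j l + T (n + j)"
    by (rule LIMSEQ_le_const2[OF F_lim[OF l]]) (use G_diff_T[OF l] in \<open>auto simp: algebra_simps\<close>)
  ultimately show ?thesis by blast
qed

lemma F_ge: "l \<in> {a..c n} \<Longrightarrow> l \<le> F n l"
  using F_bounds[of l n 0] by simp

lemma F_le_B: "l \<in> {a..c n} \<Longrightarrow> F n l \<le> B"
proof -
  assume l: "l \<in> {a..c n}"
  have "\<forall>j. G n j l \<le> B" using G_in[OF l] c_le by (meson atLeastAtMost_iff order_trans)
  thus ?thesis by (intro LIMSEQ_le_const2[OF F_lim[OF l]]) blast
qed

lemma F_in: "l \<in> {a..c n} \<Longrightarrow> F n l \<in> {a..B}"
  using F_ge F_le_B by fastforce

lemma F_slope: "l \<in> {a..c n} \<Longrightarrow> m \<in> {a..c n} \<Longrightarrow> m < l \<Longrightarrow> l - m \<le> F n l - F n m"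
proof -
  assume l: "l \<in> {a..c n}" and m: "m \<in> {a..c n}" and ml: "m < l"
  have "(\<lambda>j. G n j l - G n j m) \<longlonglongrightarrow> F n l - F n m" by (intro tendsto_diff F_lim l m)
  thus ?thesis by (rule LIMSEQ_le_const) (use G_slope[OF l m ml] in blast)
qed

lemma F_mono: "l \<in> {a..c n} \<Longrightarrow> m \<in> {a..c n} \<Longrightarrow> m \<le> l \<Longrightarrow> F n m \<le> F n l"
  using F_slope[of l n m] by (cases "m = l") auto

lemma F_strict: "l \<in> {a..c n} \<Longrightarrow> m \<in> {a..c n} \<Longrightarrow> m < l \<Longrightarrow> F n m < F n l"
  using F_slope[of l n m] by auto

lemma F_end: "F n (c n) = B"
proof -
  have "(\<lambda>j. G n j (c n)) \<longlonglongrightarrow> B"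
    using LIMSEQ_ignore_initial_segment[OF c_lim, of n] by (simp add: G_end add.commute)
  moreover have "c n \<in> {a..c n}" using a_le_c by simp
  ultimately show ?thesis using F_lim LIMSEQ_unique by blast
qed

lemma F_shift: "l \<in> {a..c n} \<Longrightarrow> F (Suc n) (g n l) = F n l"
proof -
  assume l: "l \<in> {a..c n}"
  have "(\<lambda>j. G (Suc n) j (g n l)) \<longlonglongrightarrow> F (Suc n) (g n l)" by (rule F_lim[OF g_in[OF l]])
  hence "(\<lambda>j. G n (Suc j) l) \<longlonglongrightarrow> F (Suc n) (g n l)" by (simp add: Git_shift)
  hence "(\<lambda>j. G n j l) \<longlonglongrightarrow> F (Suc n) (g n l)" by (rule LIMSEQ_imp_Suc)
  thus ?thesis using F_lim[OF l] LIMSEQ_unique by blast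
qed

lemma F_shiftG: "l \<in> {a..c n} \<Longrightarrow> F (n + j) (G n j l) = F n l"
proof (induction j)
  case 0 thus ?case by simp
next
  case (Suc j)
  have "F (Suc (n + j)) (g (n + j) (G n j l)) = F (n + j) (G n j l)" by (rule F_shift[OF G_in[OF Suc.prems]])
  thus ?case using Suc by simp
qed

lemma F_rc: "l \<in> {a..c n} \<Longrightarrow> rc (F n) l (c n)"
  unfolding rc_def
proof (intro allI impI)
  fix e :: real assume l: "l \<in> {a..c n}" and e: "e > 0"
  obtain N where N: "\<And>m. m \<ge> N \<Longrightarrow> T m < e / 2" using T_small[of "e/2"] e by auto
  obtain d where d: "d > 0" "\<And>m. m \<in> {l..c n} \<Longrightarrow> m < l + d \<Longrightarrow> dist (G n N m) (G n N l) < e / 2"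
    using G_rc[OF l, of N] e unfolding rc_def by (meson half_gt_zero)
  show "\<exists>d>0. \<forall>m\<in>{l..c n}. m < l + d \<longrightarrow> dist (F n m) (F n l) < e"
  proof (intro exI[of _ d] conjI ballI impI)
    fix m assume m: "m \<in> {l..c n}" "m < l + d"
    have m': "m \<in> {a..c n}" using m l by auto
    have "F n m \<le> G n N m + T (n + N)" using F_bounds[OF m'] by blast
    moreover have "G n N l \<le> F n l" using F_bounds[OF l] by blast
    moreover have "G n N m - G n N l < e / 2" using d(2)[OF m] unfolding dist_real_def by linarith
    moreover have "T (n + N) < e / 2" using N by simp
    moreover have "F n l \<le> F n m" using F_mono[OF m' l] m by simp
    ultimately show "dist (F n m) (F n l) < e" by (simp add: dist_real_def)
  qed (use d in simp)
qed

end

context cons begin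

lemma D_brsr: "a \<le> c n \<and> (\<forall>l\<in>{a..c n}. D n l \<in> projections M) \<and>
     (\<forall>l\<in>{a..c n}. \<forall>m\<in>{a..c n}. l \<le> m \<longrightarrow> op_le (D n m) (D n l)) \<and>
     (\<forall>l\<in>{a..c n}. \<forall>x. ((\<lambda>m. D n m x) \<longlongrightarrow> D n l x) (at l within {l..c n})) \<and>
     D n (c n) = (\<lambda>x. 0)"
  using brsrD[of n] unfolding brsr_def by blast

lemma D_proj: "l \<in> {a..c n} \<Longrightarrow> is_projection (D n l)"
  using D_brsr[of n] unfolding projections_def by blast

lemma D_norm_mono: "l \<in> {a..c n} \<Longrightarrow> m \<in> {a..c n} \<Longrightarrow> l \<le> m \<Longrightarrow> norm (D n m x) \<le> norm (D n l x)"
  using D_brsr[of n] op_le_proj_iff[OF D_proj D_proj] by blast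

lemma D_rc: "l \<in> {a..c n} \<Longrightarrow> rc (\<lambda>m. D n m x) l (c n)"
  using D_brsr[of n] by (blast intro: tendsto_rc)

definition tt :: "nat \<Rightarrow> real \<Rightarrow> real" where "tt n \<mu> = Inf {l \<in> {a..c n}. \<mu> \<le> F n l}"

lemma tt_set: "\<mu> \<le> B \<Longrightarrow> c n \<in> {l \<in> {a..c n}. \<mu> \<le> F n l}"
  using F_end a_le_c by simp

lemma tt_bdd: "bdd_below {l \<in> {a..c n}. \<mu> \<le> F n l}"
  by (rule bdd_belowI[of _ a]) simp

lemma tt_le: "l \<in> {a..c n} \<Longrightarrow> \<mu> \<le> F n l \<Longrightarrow> tt n \<mu> \<le> l"
  unfolding tt_def by (rule cInf_lower[OF _ tt_bdd]) simp

lemma tt_in: "\<mu> \<le> B \<Longrightarrow> tt n \<mu> \<in> {a..c n}"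
proof -
  assume mu: "\<mu> \<le> B"
  have "tt n \<mu> \<le> c n" by (rule tt_le) (use tt_set[OF mu] in auto)
  moreover have "a \<le> tt n \<mu>" unfolding tt_def
    by (rule cInf_greatest) (use tt_set[OF mu] in auto)
  ultimately show ?thesis by simp
qed

lemma tt_F_ge: "\<mu> \<le> B \<Longrightarrow> \<mu> \<le> F n (tt n \<mu>)"
proof (rule ccontr)
  assume mu: "\<mu> \<le> B" and "\<not> \<mu> \<le> F n (tt n \<mu>)"
  hence lt: "F n (tt n \<mu>) < \<mu>" by simp
  define t where "t = tt n \<mu>"
  have t: "t \<in> {a..c n}" unfolding t_def by (rule tt_in[OF mu])
  obtain d where d: "d > 0" "\<And>m. m \<in> {t..c n} \<Longrightarrow> m < t + d \<Longrightarrow> dist (F n m) (F n t) < \<mu> - F n t"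
    using F_rc[OF t] lt unfolding rc_def t_def by (metis diff_gt_0_iff_gt)
  have "t < t + d" using d by simp
  hence "\<exists>x\<in>{l \<in> {a..c n}. \<mu> \<le> F n l}. x < t + d"
    unfolding t_def tt_def using cInf_less_iff[OF _ tt_bdd] tt_set[OF mu] by blast
  then obtain m where m: "m \<in> {a..c n}" "\<mu> \<le> F n m" "m < t + d" by blast
  have "t \<le> m" unfolding t_def using tt_le[OF m(1,2)] .
  hence "dist (F n m) (F n t) < \<mu> - F n t" using d(2) m by simp
  thus False using m(2) by (simp add: dist_real_def)
qed

lemma tt_mono: "\<mu> \<le> \<nu> \<Longrightarrow> \<nu> \<le> B \<Longrightarrow> tt n \<mu> \<le> tt n \<nu>"
proof -
  assume mn: "\<mu> \<le> \<nu>" and nuB: "\<nu> \<le> B"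
  show ?thesis by (rule tt_le[OF tt_in[OF nuB]]) (rule order_trans[OF mn tt_F_ge[OF nuB]])
qed

lemma tt_F: "l \<in> {a..c n} \<Longrightarrow> tt n (F n l) = l"
proof -
  assume l: "l \<in> {a..c n}"
  have FB: "F n l \<le> B" by (rule F_le_B[OF l])
  have le: "tt n (F n l) \<le> l" by (rule tt_le[OF l]) simp
  have "F n l \<le> F n (tt n (F n l))" by (rule tt_F_ge[OF FB])
  moreover have "tt n (F n l) < l \<Longrightarrow> F n (tt n (F n l)) < F n l"
    by (rule F_strict[OF l tt_in[OF FB]])
  ultimately show ?thesis using le by force
qed

lemma tt_end: "tt n B = c n"
  using tt_F[of "c n" n] F_end a_le_c by simp

lemma tt_Suc: "\<mu> \<le> B \<Longrightarrow> tt (Suc n) \<mu> \<le> g n (tt n \<mu>)"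
proof -
  assume mu: "\<mu> \<le> B"
  have t: "tt n \<mu> \<in> {a..c n}" by (rule tt_in[OF mu])
  show ?thesis
    by (rule tt_le[OF g_in[OF t]]) (simp add: F_shift[OF t] tt_F_ge[OF mu])
qed

lemma tt_rc: "\<mu> \<le> B \<Longrightarrow> e > 0 \<Longrightarrow> \<exists>d>0. \<forall>\<nu>. \<mu> \<le> \<nu> \<longrightarrow> \<nu> \<le> B \<longrightarrow> \<nu> < \<mu> + d \<longrightarrow> tt n \<nu> < tt n \<mu> + e"
proof -
  assume mu: "\<mu> \<le> B" and e: "e > 0"
  have t: "tt n \<mu> \<in> {a..c n}" by (rule tt_in[OF mu])
  show ?thesis
  proof (cases "tt n \<mu> + e / 2 \<le> c n")
    case True
    define l where "l = tt n \<mu> + e / 2"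
    have l: "l \<in> {a..c n}" using True t e by (simp add: l_def)
    have "F n (tt n \<mu>) < F n l" by (rule F_strict[OF l t]) (use e in \<open>simp add: l_def\<close>)
    hence dpos: "F n l - \<mu> > 0" using tt_F_ge[OF mu, of n] by linarith
    show ?thesis
    proof (intro exI[of _ "F n l - \<mu>"] conjI allI impI)
      fix \<nu> assume "\<mu> \<le> \<nu>" "\<nu> \<le> B" "\<nu> < \<mu> + (F n l - \<mu>)"
      hence "tt n \<nu> \<le> l" by (intro tt_le[OF l]) simp
      thus "tt n \<nu> < tt n \<mu> + e" using e by (simp add: l_def)
    qed (rule dpos)
  next
    case False
    show ?thesis
    proof (intro exI[of _ 1] conjI allI impI)
      fix \<nu> assume "\<mu> \<le> \<nu>" "\<nu> \<le> B" "\<nu> < \<mu> + 1"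
      hence "tt n \<nu> \<le> c n" using tt_in by auto
      thus "tt n \<nu> < tt n \<mu> + e" using False e by linarith
    qed simp
  qed
qed

definition PP :: "nat \<Rightarrow> real \<Rightarrow> 'a \<Rightarrow> 'a" where "PP n \<mu> = D n (tt n \<mu>)"

lemma PP_proj: "\<mu> \<le> B \<Longrightarrow> is_projection (PP n \<mu>)"
  unfolding PP_def by (rule D_proj[OF tt_in])

lemma PP_S: "\<mu> \<le> B \<Longrightarrow> PP n \<mu> \<in> S"
  unfolding PP_def by (rule DS[OF tt_in])

lemma PP_mono_n: "\<mu> \<le> B \<Longrightarrow> norm (PP n \<mu> x) \<le> norm (PP (Suc n) \<mu> x)"
proof -
  assume mu: "\<mu> \<le> B"
  have t: "tt n \<mu> \<in> {a..c n}" by (rule tt_in[OF mu])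
  have "norm (D (Suc n) (g n (tt n \<mu>)) x) \<le> norm (D (Suc n) (tt (Suc n) \<mu>) x)"
    by (rule D_norm_mono[OF tt_in[OF mu] g_in[OF t] tt_Suc[OF mu]])
  thus ?thesis unfolding PP_def g_D[OF t] .
qed

lemma PP_mono_mu: "\<mu> \<le> \<nu> \<Longrightarrow> \<nu> \<le> B \<Longrightarrow> norm (PP n \<nu> x) \<le> norm (PP n \<mu> x)"
  unfolding PP_def by (rule D_norm_mono[OF tt_in tt_in tt_mono]) simp_all

lemma PP_rc: "\<mu> \<le> B \<Longrightarrow> rc (\<lambda>\<nu>. PP n \<nu> x) \<mu> B"
  unfolding rc_def
proof (intro allI impI)
  fix e :: real assume mu: "\<mu> \<le> B" and e: "e > 0"
  have t: "tt n \<mu> \<in> {a..c n}" by (rule tt_in[OF mu])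
  obtain d1 where d1: "d1 > 0" "\<And>m. m \<in> {tt n \<mu>..c n} \<Longrightarrow> m < tt n \<mu> + d1 \<Longrightarrow> dist (D n m x) (D n (tt n \<mu>) x) < e"
    using D_rc[OF t, of x] e unfolding rc_def by blast
  obtain d where d: "d > 0" "\<And>\<nu>. \<mu> \<le> \<nu> \<Longrightarrow> \<nu> \<le> B \<Longrightarrow> \<nu> < \<mu> + d \<Longrightarrow> tt n \<nu> < tt n \<mu> + d1"
    using tt_rc[OF mu d1(1)] by blast
  show "\<exists>d>0. \<forall>m\<in>{\<mu>..B}. m < \<mu> + d \<longrightarrow> dist (PP n m x) (PP n \<mu> x) < e"
  proof (intro exI[of _ d] conjI ballI impI)
    fix \<nu> assume nu: "\<nu> \<in> {\<mu>..B}" "\<nu> < \<mu> + d"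
    have "tt n \<nu> \<in> {tt n \<mu>..c n}" using tt_mono[of \<mu> \<nu>] tt_in[of \<nu>] nu by auto
    moreover have "tt n \<nu> < tt n \<mu> + d1" using d(2) nu by auto
    ultimately show "dist (PP n \<nu> x) (PP n \<mu> x) < e" unfolding PP_def by (rule d1(2))
  qed (rule d(1))
qed

definition E :: "real \<Rightarrow> 'a \<Rightarrow> 'a" where "E \<mu> = (\<lambda>x. lim (\<lambda>n. PP n \<mu> x))"

lemma E_props:
  assumes mu: "\<mu> \<le> B"
  shows "\<And>x. (\<lambda>n. PP n \<mu> x) \<longlonglongrightarrow> E \<mu> x"
    and "is_projection (E \<mu>)"
    and "\<And>n x. norm (PP n \<mu> x) \<le> norm (E \<mu> x)"
    and "E \<mu> \<in> S"
proof -
  note props = mono_proj_lim_props[of "\<lambda>n. PP n \<mu>", OF PP_proj[OF mu] PP_mono_n[OF mu] E_def]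
  show "\<And>x. (\<lambda>n. PP n \<mu> x) \<longlonglongrightarrow> E \<mu> x" by (rule props(1))
  show "is_projection (E \<mu>)" by (rule props(2))
  show "\<And>n x. norm (PP n \<mu> x) \<le> norm (E \<mu> x)" by (rule props(3))
  have imp: "(\<forall>n. PP n \<mu> \<in> S \<and> is_projection (PP n \<mu>)) \<and> (\<forall>n x. norm (PP n \<mu> x) \<le> norm (PP (Suc n) \<mu> x))
      \<longrightarrow> (\<lambda>x. lim (\<lambda>n. PP n \<mu> x)) \<in> S"
    using spec[OF Sc[unfolded seq_closed_def], of "\<lambda>n. PP n \<mu>"] by simp
  have "(\<forall>n. PP n \<mu> \<in> S \<and> is_projection (PP n \<mu>)) \<and> (\<forall>n x. norm (PP n \<mu> x) \<le> norm (PP (Suc n) \<mu> x))"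
    using PP_S[OF mu] PP_proj[OF mu] PP_mono_n[OF mu] by blast
  with imp show "E \<mu> \<in> S" unfolding E_def by blast
qed

lemma E_mono: "\<mu> \<le> \<nu> \<Longrightarrow> \<nu> \<le> B \<Longrightarrow> norm (E \<nu> x) \<le> norm (E \<mu> x)"
proof -
  assume a1: "\<mu> \<le> \<nu>" and a2: "\<nu> \<le> B"
  have mu: "\<mu> \<le> B" using a1 a2 by simp
  show ?thesis
    by (rule LIMSEQ_le[OF tendsto_norm[OF E_props(1)[OF a2]] tendsto_norm[OF E_props(1)[OF mu]]])
       (use PP_mono_mu[OF a1 a2] in blast)
qed

lemma E_B: "E B = (\<lambda>x. 0)"
proof -
  have "PP n B = (\<lambda>x. 0)" for n unfolding PP_def tt_end using D_brsr by blast
  thus ?thesis unfolding E_def by simp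
qed

lemma E_F: "l \<in> {a..c n} \<Longrightarrow> E (F n l) = D n l"
proof
  fix x
  assume l: "l \<in> {a..c n}"
  have FB: "F n l \<le> B" by (rule F_le_B[OF l])
  have ev: "PP (n + j) (F n l) = D n l" for j
  proof -
    have "tt (n + j) (F n l) = G n j l"
      using tt_F[OF G_in[OF l, of j]] F_shiftG[OF l, of j] by simp
    thus ?thesis unfolding PP_def using G_D[OF l] by simp
  qed
  have "eventually (\<lambda>m. PP m (F n l) x = D n l x) sequentially"
    unfolding eventually_sequentially
  proof (intro exI[of _ n] allI impI)
    fix m assume "n \<le> m"
    then obtain j where "m = n + j" using le_Suc_ex by blast
    thus "PP m (F n l) x = D n l x" using ev by simp
  qed
  hence "(\<lambda>m. PP m (F n l) x) \<longlonglongrightarrow> D n l x" by (rule tendsto_eventually)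
  thus "E (F n l) x = D n l x" using E_props(1)[OF FB] LIMSEQ_unique by blast
qed

lemma E_rc: "\<mu> \<le> B \<Longrightarrow> rc (\<lambda>\<nu>. E \<nu> x) \<mu> B"
  unfolding rc_def
proof (intro allI impI)
  fix e :: real assume mu: "\<mu> \<le> B" and e: "e > 0"
  have e2: "e^2 / 2 > 0" using e by simp
  have "(\<lambda>n. (norm (PP n \<mu> x))^2) \<longlonglongrightarrow> (norm (E \<mu> x))^2"
    by (intro tendsto_intros E_props(1)[OF mu])
  hence "\<forall>r>0. eventually (\<lambda>n. dist ((norm (PP n \<mu> x))^2) ((norm (E \<mu> x))^2) < r) sequentially"
    by (simp only: tendsto_iff)
  hence "eventually (\<lambda>n. dist ((norm (PP n \<mu> x))^2) ((norm (E \<mu> x))^2) < e^2 / 2) sequentially"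
    using e2 by blast
  then obtain N where "\<forall>n\<ge>N. dist ((norm (PP n \<mu> x))^2) ((norm (E \<mu> x))^2) < e^2 / 2"
    unfolding eventually_sequentially by blast
  hence n: "dist ((norm (PP N \<mu> x))^2) ((norm (E \<mu> x))^2) < e^2 / 2" by simp
  define n where "n = N"
  note n = n[folded n_def]
  have "e / 2 > 0" using e by simp
  then obtain d where d: "d > 0" "\<And>\<nu>. \<nu> \<in> {\<mu>..B} \<Longrightarrow> \<nu> < \<mu> + d \<Longrightarrow> dist (PP n \<nu> x) (PP n \<mu> x) < e / 2"
    using PP_rc[OF mu, of n x] unfolding rc_def by blast
  show "\<exists>d>0. \<forall>m\<in>{\<mu>..B}. m < \<mu> + d \<longrightarrow> dist (E m x) (E \<mu> x) < e"
  proof (intro exI[of _ d] conjI ballI impI)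
    fix \<nu> assume nu: "\<nu> \<in> {\<mu>..B}" "\<nu> < \<mu> + d"
    have nB: "\<nu> \<le> B" "\<mu> \<le> \<nu>" using nu by auto
    have h1: "(norm (E \<mu> x - E \<nu> x))^2 = (norm (E \<mu> x))^2 - (norm (E \<nu> x))^2"
      by (rule proj_le_diff[OF E_props(2)[OF nB(1)] E_props(2)[OF mu]]) (rule E_mono[OF nB(2,1)])
    have h2: "(norm (PP n \<mu> x - PP n \<nu> x))^2 = (norm (PP n \<mu> x))^2 - (norm (PP n \<nu> x))^2"
      by (rule proj_le_diff[OF PP_proj[OF nB(1)] PP_proj[OF mu]]) (rule PP_mono_mu[OF nB(2,1)])
    have h3: "norm (PP n \<nu> x) \<le> norm (E \<nu> x)" by (rule E_props(3)[OF nB(1)])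
    hence h3': "(norm (PP n \<nu> x))^2 \<le> (norm (E \<nu> x))^2" by (simp add: power_mono)
    have h4: "(norm (E \<mu> x))^2 - (norm (PP n \<mu> x))^2 < e^2 / 2"
      using n unfolding dist_real_def by linarith
    have "norm (PP n \<mu> x - PP n \<nu> x) < e / 2" using d(2)[OF nu] by (simp add: dist_norm norm_minus_commute)
    hence "(norm (PP n \<mu> x - PP n \<nu> x))^2 < (e / 2)^2" by (simp add: power_strict_mono)
    hence h5: "(norm (PP n \<mu> x))^2 - (norm (PP n \<nu> x))^2 < e^2 / 4" using h2 by (simp add: power_divide)
    have "(norm (E \<mu> x - E \<nu> x))^2 < e^2" using h1 h3' h4 h5 e2 by linarith
    hence "norm (E \<mu> x - E \<nu> x) < e" by (rule power_less_imp_less_base) (use e in simp)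
    thus "dist (E \<nu> x) (E \<mu> x) < e" by (simp add: dist_norm norm_minus_commute)
  qed (rule d(1))
qed

lemma cons_main:
  "\<exists>E. brsr M a B (E a) E \<and> (\<forall>n. strongly_refines a B E a (c n) (D n)) \<and> (\<forall>l\<in>{a..B}. E l \<in> S)"
proof (intro exI[of _ E] conjI ballI allI)
  have aB: "a \<le> B" using a_le_c[of 0] c_le[of 0] by simp
  have EM: "E l \<in> projections M" if "l \<le> B" for l
    using E_props(2,4)[OF that] SM unfolding projections_def by blast
  show "brsr M a B (E a) E" unfolding brsr_def
  proof (intro conjI ballI allI impI)
    show "a \<le> B" by (rule aB)
    show "E a \<in> projections M" using EM aB by simp
    show "E l \<in> projections M" if "l \<in> {a..B}" for l using EM that by simp
    show "op_le (E m) (E l)" if "l \<in> {a..B}" "m \<in> {a..B}" "l \<le> m" for l m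
      using op_le_proj_iff[OF E_props(2) E_props(2)] E_mono that by auto
    show "((\<lambda>m. E m x) \<longlongrightarrow> E l x) (at l within {l..B})" if "l \<in> {a..B}" for l x
      by (rule rc_tendsto[OF E_rc]) (use that in simp)
    show "E B = (\<lambda>x. 0)" by (rule E_B)
  qed simp
  show "E l \<in> S" if "l \<in> {a..B}" for l using E_props(4) that by simp
  show "strongly_refines a B E a (c n) (D n)" for n
    unfolding strongly_refines_def strong_refinement_def
  proof (intro exI[of _ "F n"] conjI ballI allI impI)
    show "F n l \<in> {a..B}" if "l \<in> {a..c n}" for l by (rule F_in[OF that])
    show "mono_on {a..c n} (F n)" by (rule mono_onI) (rule F_mono; simp)
    show "(F n \<longlongrightarrow> F n l) (at l within {l..c n})" if "l \<in> {a..c n}" for l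
      using rc_tendsto[OF F_rc[OF that]] by simp
    show "F n (c n) = B" by (rule F_end)
    show "D n l = E (F n l)" if "l \<in> {a..c n}" for l using E_F[OF that] by simp
    show "l \<le> F n l" if "l \<in> {a..c n}" for l by (rule F_ge[OF that])
    show "l - m \<le> F n l - F n m" if "l \<in> {a..c n}" "m \<in> {a..c n}" "m < l" for l m
      by (rule F_slope[OF that])
  qed
qed

end

lemma Iend_Suc: "Iend al b (Suc n) = b + (\<Sum>i<Suc n. al (Suc i))"
proof -
  have "sum al {1..Suc n} = sum al {Suc 0..Suc n}" by simp
  also have "\<dots> = sum (al \<circ> Suc) {0..n}" by (rule sum.atLeast_Suc_atMost_Suc_shift)
  also have "\<dots> = (\<Sum>i<Suc n. al (Suc i))" by (simp add: atLeast0AtMost lessThan_Suc_atMost)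
  finally show ?thesis unfolding Iend_def by simp
qed

lemma final_helper:
  fixes M S :: "('h::chilbert_space \<Rightarrow> 'h) set"
    and al :: "nat \<Rightarrow> real" and a b :: real and EE :: "nat \<Rightarrow> real \<Rightarrow> 'h \<Rightarrow> 'h"
  assumes pos: "\<And>k. k \<ge> 1 \<Longrightarrow> al k > 0"
    and sm: "summable al"
    and comp: "compatible M al a b EE"
    and SM: "S \<subseteq> M" and Sc: "seq_closed S"
    and ES: "\<forall>k\<ge>1. \<forall>l\<in>{a..Iend al b k}. EE k l \<in> S"
  shows "\<exists>a' b' p E. brsr M a' b' p E \<and>
            (\<forall>k\<ge>1. strongly_refines a' b' E a (Iend al b k) (EE k)) \<and> (\<forall>l\<in>{a'..b'}. E l \<in> S)"
proof -
  have "\<forall>k. \<exists>f. k \<ge> 1 \<longrightarrow> strong_refinement a (Iend al b (k+1)) (EE (k+1)) f a (Iend al b k) (EE k) \<and>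
             (\<forall>l\<in>{a..Iend al b k}. f l - l \<le> al k)"
    using comp unfolding compatible_def by blast
  then obtain f where f: "\<And>k. k \<ge> 1 \<Longrightarrow> strong_refinement a (Iend al b (k+1)) (EE (k+1)) (f k) a (Iend al b k) (EE k) \<and>
             (\<forall>l\<in>{a..Iend al b k}. f k l - l \<le> al k)"
    by metis
  define c where "c n = Iend al b (Suc n)" for n
  define \<alpha> where "\<alpha> n = al (Suc n)" for n
  define D where "D n = EE (Suc n)" for n
  define g where "g n = f (Suc n)" for n
  define B where "B = b + (\<Sum>i. \<alpha> i)"
  have sa: "summable \<alpha>" unfolding \<alpha>_def using sm summable_iff_shift[of al 1] by simp
  have cS: "c n = b + (\<Sum>i<Suc n. \<alpha> i)" for n unfolding c_def \<alpha>_def by (rule Iend_Suc)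
  have "cons M S a B c \<alpha> D g"
  proof
    show "\<alpha> n \<ge> 0" for n unfolding \<alpha>_def using pos[of "Suc n"] by simp
    show "summable \<alpha>" by (rule sa)
    show "c n \<le> B" for n
    proof -
      have "(\<Sum>i<Suc n. \<alpha> i) \<le> (\<Sum>i. \<alpha> i)"
        by (rule sum_le_suminf[OF sa]) (simp_all add: \<alpha>_def less_imp_le pos)
      thus ?thesis unfolding cS B_def by simp
    qed
    have "(\<lambda>n. \<Sum>i<n. \<alpha> i) \<longlonglongrightarrow> (\<Sum>i. \<alpha> i)" by (rule summable_LIMSEQ[OF sa])
    hence "(\<lambda>n. \<Sum>i<Suc n. \<alpha> i) \<longlonglongrightarrow> (\<Sum>i. \<alpha> i)" by (rule LIMSEQ_Suc)
    hence "(\<lambda>n. b + (\<Sum>i<Suc n. \<alpha> i)) \<longlonglongrightarrow> B" unfolding B_def by (intro tendsto_intros)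
    moreover have "c = (\<lambda>n. b + (\<Sum>i<Suc n. \<alpha> i))" using cS by (rule ext)
    ultimately show "c \<longlonglongrightarrow> B" by simp
    show "\<exists>p. brsr M a (c n) p (D n)" for n
      using comp unfolding compatible_def c_def D_def by simp
    show "strong_refinement a (c (Suc n)) (D (Suc n)) (g n) a (c n) (D n)" for n
      using f[of "Suc n"] unfolding c_def D_def g_def by simp
    show "g n l - l \<le> \<alpha> n" if "l \<in> {a..c n}" for n l
      using f[of "Suc n"] that unfolding c_def g_def \<alpha>_def by simp
    show "D n l \<in> S" if "l \<in> {a..c n}" for n l
      using ES that unfolding c_def D_def by simp
    show "S \<subseteq> M" by (rule SM)
    show "seq_closed S" by (rule Sc)
  qed
  from cons.cons_main[OF this] obtain E where
    E: "brsr M a B (E a) E" "\<And>n. strongly_refines a B E a (c n) (D n)" "\<And>l. l \<in> {a..B} \<Longrightarrow> E l \<in> S"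
    by blast
  have "\<forall>k\<ge>1. strongly_refines a B E a (Iend al b k) (EE k)"
  proof (intro allI impI)
    fix k :: nat assume "k \<ge> 1"
    then obtain n where "k = Suc n" using not0_implies_Suc by fastforce
    thus "strongly_refines a B E a (Iend al b k) (EE k)" using E(2)[of n] unfolding c_def D_def by simp
  qed
  thus ?thesis using E(1,3) by blast
qed

theorem lemma3p5:
  fixes M :: "('h::chilbert_space \<Rightarrow> 'h) set"
    and \<tau> :: "('h \<Rightarrow> 'h) \<Rightarrow> complex"
    and al :: "nat \<Rightarrow> real"
    and a b :: real
    and EE :: "nat \<Rightarrow> real \<Rightarrow> 'h \<Rightarrow> 'h"
  assumes "II1_factor M \<tau>"
    and "\<And>k. k \<ge> 1 \<Longrightarrow> al k > 0"
    and "summable al"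
    and "compatible M al a b EE"
  shows "(\<exists>a' b' p E. brsr M a' b' p E \<and>
            (\<forall>k\<ge>1. strongly_refines a' b' E a (Iend al b k) (EE k)))
       \<and> (\<forall>A. masa M A \<and> (\<forall>k\<ge>1. \<forall>l\<in>{a..Iend al b k}. EE k l \<in> A) \<longrightarrow>
            (\<exists>a' b' p E. brsr M a' b' p E \<and>
               (\<forall>k\<ge>1. strongly_refines a' b' E a (Iend al b k) (EE k)) \<and>
               (\<forall>l\<in>{a'..b'}. E l \<in> A)))"
proof (intro conjI allI impI)
  have vna: "von_neumann_algebra M" using assms(1) unfolding II1_factor_def factor_def by blast
  have EM: "\<forall>k\<ge>1. \<forall>l\<in>{a..Iend al b k}. EE k l \<in> M"
    using assms(4) unfolding compatible_def brsr_def projections_def by blast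
  show "\<exists>a' b' p E. brsr M a' b' p E \<and> (\<forall>k\<ge>1. strongly_refines a' b' E a (Iend al b k) (EE k))"
    using final_helper[OF assms(2,3,4) order_refl seq_closed_vna[OF vna] EM] by blast
  fix A assume A: "masa M A \<and> (\<forall>k\<ge>1. \<forall>l\<in>{a..Iend al b k}. EE k l \<in> A)"
  have AM: "A \<subseteq> M" using A unfolding masa_def abelian_star_subalgebra_of_def by blast
  show "\<exists>a' b' p E. brsr M a' b' p E \<and> (\<forall>k\<ge>1. strongly_refines a' b' E a (Iend al b k) (EE k)) \<and>
               (\<forall>l\<in>{a'..b'}. E l \<in> A)"
    by (rule final_helper[OF assms(2,3,4) AM seq_closed_masa[OF vna]]) (use A in blast)+
qed

end
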